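(* Let $F$ be a Hilbert space and $E$ an $\mathcal{L}_{\infty}$ space. Then every mapping $f:E\rightarrow F$ that is analytic at $a\in E$ is almost $2$-summing at $a$. In particular, every entire mapping $f:E\rightarrow F$ is almost $2$-summing at every point of $E$.
   Context: $(r_j)$ are the Rademacher functions. For a finite sequence $(x_j)_{j=1}^k$ in $E$, $\Vert(x_{j})_{j=1}^k\Vert_{w,2}:=\sup_{\varphi\in B_{E'}}(\sum_{j=1}^k|\varphi(x_{j})|^{2})^{1/2}$. $f$ is almost $2$-summing at $a$ if there exist $C_a,\epsilon_a,r_a>0$ with $(\int_{0}^{1}\Vert\sum_{j=1}^{k}(f(a+x_{j})-f(a))r_{j}(t)\Vert^{2}dt)^{1/2}\leq C_{a}\Vert(x_{j})_{j=1}^{k}\Vert_{w,2}^{r_{a}}$ for all $k$ and $x_1,\dots,x_k\in E$ with $\Vert(x_{j})_{j=1}^{k}\Vert_{w,2}<\epsilon_{a}$. "Analytic at $a$" means $f(a+x)=f(a)+\sum_{k\ge1}\frac1{k!}\hat d^kf(a)(x)$ near $x=0$ with continuous $k$-homogeneous polynomials satisfying $\Vert\frac1{k!}\hat d^kf(a)\Vert\le Cc^k$; entire means analytic everywhere with the series converging on all of $E$. *)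

theory Defs
  imports "HOL-Analysis.Analysis"
begin

definition rademacher :: "nat \<Rightarrow> real \<Rightarrow> real" where
  "rademacher j t = sgn (sin (2 ^ j * pi * t))"

definition dual_ball :: "('a::real_normed_vector \<Rightarrow> real) set" where
  "dual_ball = {\<phi>. bounded_linear \<phi> \<and> onorm \<phi> \<le> 1}"

definition weak2_norm :: "nat \<Rightarrow> (nat \<Rightarrow> 'a::real_normed_vector) \<Rightarrow> real" where
  "weak2_norm k x = Sup ((\<lambda>\<phi>. sqrt (\<Sum>j\<in>{1..k}. \<bar>\<phi> (x j)\<bar>^2)) ` dual_ball)"

definition almost_2_summing_at :: "('a::real_normed_vector \<Rightarrow> 'b::real_normed_vector) \<Rightarrow> 'a \<Rightarrow> bool" where
  "almost_2_summing_at f a \<longleftrightarrow>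
     (\<exists>C \<epsilon> r. C > 0 \<and> \<epsilon> > 0 \<and> r > 0 \<and>
        (\<forall>k (x :: nat \<Rightarrow> 'a). weak2_norm k x < \<epsilon> \<longrightarrow>
           sqrt (integral {0..1} (\<lambda>t. (norm (\<Sum>j\<in>{1..k}. rademacher j t *\<^sub>R (f (a + x j) - f a)))^2))
             \<le> C * weak2_norm k x powr r))"

definition cont_multilinear :: "nat \<Rightarrow> ((nat \<Rightarrow> 'a::real_normed_vector) \<Rightarrow> 'b::real_normed_vector) \<Rightarrow> bool" where
  "cont_multilinear k A \<longleftrightarrow>
     (\<forall>v w. (\<forall>i<k. v i = w i) \<longrightarrow> A v = A w) \<and>
     (\<forall>i<k. \<forall>v. linear (\<lambda>y. A (v(i := y)))) \<and>
     (\<exists>K. \<forall>v. norm (A v) \<le> K * (\<Prod>i<k. norm (v i)))"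

definition cont_hom_poly :: "nat \<Rightarrow> ('a::real_normed_vector \<Rightarrow> 'b::real_normed_vector) \<Rightarrow> bool" where
  "cont_hom_poly k P \<longleftrightarrow> (\<exists>A. cont_multilinear k A \<and> (\<forall>x. P x = A (\<lambda>_. x)))"

definition analytic_at_pt :: "('a::real_normed_vector \<Rightarrow> 'b::real_normed_vector) \<Rightarrow> 'a \<Rightarrow> bool" where
  "analytic_at_pt f a \<longleftrightarrow>
     (\<exists>P C c \<delta>. \<delta> > 0 \<and> (\<forall>k\<ge>1. cont_hom_poly k (P k)) \<and>
        (\<forall>k\<ge>1. \<forall>x. norm (P k x) \<le> C * c ^ k * norm x ^ k) \<and>
        (\<forall>x. norm x < \<delta> \<longrightarrow> (\<lambda>k. P (Suc k) x) sums (f (a + x) - f a)))"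

definition entire_map :: "('a::real_normed_vector \<Rightarrow> 'b::real_normed_vector) \<Rightarrow> bool" where
  "entire_map f \<longleftrightarrow>
     (\<forall>a. \<exists>P C c. (\<forall>k\<ge>1. cont_hom_poly k (P k)) \<and>
        (\<forall>k\<ge>1. \<forall>x. norm (P k x) \<le> C * c ^ k * norm x ^ k) \<and>
        (\<forall>x. (\<lambda>k. P (Suc k) x) sums (f (a + x) - f a)))"

(* sup norm on l_infty^n, realised as functions nat => real supported on {..<n} *)
definition linf_norm :: "nat \<Rightarrow> (nat \<Rightarrow> real) \<Rightarrow> real" where
  "linf_norm n y = Max (insert 0 ((\<lambda>i. \<bar>y i\<bar>) ` {..<n}))"

definition fin_dim_subspace :: "'a::real_vector set \<Rightarrow> bool" where
  "fin_dim_subspace M \<longleftrightarrow> subspace M \<and> (\<exists>B. finite B \<and> M = span B)"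

(* N is lambda-isomorphic to l_infty^n: Banach-Mazur distance d(N, l_infty^n) <= lambda *)
definition close_to_linf :: "real \<Rightarrow> 'a::real_normed_vector set \<Rightarrow> bool" where
  "close_to_linf lam N \<longleftrightarrow>
     (\<exists>n T. (\<forall>x y. T (x + y) = (\<lambda>i. T x i + T y i)) \<and>
        (\<forall>c x. T (c *\<^sub>R x) = (\<lambda>i. c * T x i)) \<and> bij_betw T N {y :: nat \<Rightarrow> real. \<forall>i\<ge>n. y i = 0} \<and>
        (\<forall>x\<in>N. linf_norm n (T x) \<le> norm x \<and> norm x \<le> lam * linf_norm n (T x)))"

definition L_infty_space :: "'a::real_normed_vector itself \<Rightarrow> bool" where
  "L_infty_space _ \<longleftrightarrow>
     (\<exists>lam\<ge>1. \<forall>M :: 'a set. fin_dim_subspace M \<longrightarrow>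
        (\<exists>N. fin_dim_subspace N \<and> M \<subseteq> N \<and> close_to_linf lam N))"

end

theory Submission
  imports Defs
begin


definition signs :: "nat set \<Rightarrow> (nat \<Rightarrow> real) set" where
  "signs J = PiE J (\<lambda>_. {-1, 1})"

definition avg :: "nat set \<Rightarrow> ((nat \<Rightarrow> real) \<Rightarrow> real) \<Rightarrow> real" where
  "avg J g = (\<Sum>\<epsilon>\<in>signs J. g \<epsilon>) / 2 ^ card J"

lemma finite_signs: "finite J \<Longrightarrow> finite (signs J)"
  unfolding signs_def by (intro finite_PiE) auto

lemma card_signs: "finite J \<Longrightarrow> card (signs J) = 2 ^ card J"
  unfolding signs_def by (simp add: card_PiE numeral_2_eq_2)

lemma signs_val: "\<epsilon> \<in> signs J \<Longrightarrow> j \<in> J \<Longrightarrow> \<epsilon> j = -1 \<or> \<epsilon> j = 1"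
  unfolding signs_def by (auto simp: PiE_def Pi_def)

lemma signs_out: "\<epsilon> \<in> signs J \<Longrightarrow> j \<notin> J \<Longrightarrow> \<epsilon> j = undefined"
  unfolding signs_def by (auto simp: PiE_def extensional_def)

lemma signs_sq: "\<epsilon> \<in> signs J \<Longrightarrow> j \<in> J \<Longrightarrow> \<epsilon> j * \<epsilon> j = 1"
  using signs_val by fastforce

lemma signs_abs: "\<epsilon> \<in> signs J \<Longrightarrow> j \<in> J \<Longrightarrow> \<bar>\<epsilon> j\<bar> = 1"
  using signs_val by fastforce

lemma avg_cong: "(\<And>\<epsilon>. \<epsilon> \<in> signs J \<Longrightarrow> f \<epsilon> = g \<epsilon>) \<Longrightarrow> avg J f = avg J g"
  unfolding avg_def by (metis (no_types, lifting) sum.cong)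

lemma avg_const: "finite J \<Longrightarrow> avg J (\<lambda>_. c) = c"
  unfolding avg_def by (simp add: card_signs)

lemma avg_add: "avg J (\<lambda>\<epsilon>. f \<epsilon> + g \<epsilon>) = avg J f + avg J g"
  unfolding avg_def by (simp add: sum.distrib add_divide_distrib)

lemma avg_diff: "avg J (\<lambda>\<epsilon>. f \<epsilon> - g \<epsilon>) = avg J f - avg J g"
  unfolding avg_def by (simp add: sum_subtractf diff_divide_distrib)

lemma avg_cmult: "avg J (\<lambda>\<epsilon>. c * f \<epsilon>) = c * avg J f"
  unfolding avg_def by (simp add: sum_distrib_left)

lemma avg_multc: "avg J (\<lambda>\<epsilon>. f \<epsilon> * c) = avg J f * c"
  unfolding avg_def by (simp add: sum_distrib_right)

lemma avg_sum: "avg J (\<lambda>\<epsilon>. \<Sum>i\<in>I. f i \<epsilon>) = (\<Sum>i\<in>I. avg J (f i))"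
  unfolding avg_def by (simp add: sum.swap[of _ I] sum_divide_distrib)

lemma avg_mono: "(\<And>\<epsilon>. \<epsilon> \<in> signs J \<Longrightarrow> f \<epsilon> \<le> g \<epsilon>) \<Longrightarrow> avg J f \<le> avg J g"
  unfolding avg_def by (intro divide_right_mono sum_mono) auto

lemma avg_nonneg: "(\<And>\<epsilon>. \<epsilon> \<in> signs J \<Longrightarrow> 0 \<le> f \<epsilon>) \<Longrightarrow> 0 \<le> avg J f"
  using avg_mono[of J "\<lambda>_. 0" f] unfolding avg_def by simp

lemma avg_insert:
  assumes "finite J" "j \<notin> J"
  shows "avg (insert j J) g = (avg J (\<lambda>\<epsilon>. g (\<epsilon>(j := 1))) + avg J (\<lambda>\<epsilon>. g (\<epsilon>(j := -1)))) / 2"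
proof -
  have si: "signs (insert j J) = (\<lambda>(y, h). h(j := y)) ` ({-1,1} \<times> signs J)"
    unfolding signs_def by (rule PiE_insert_eq)
  have inj: "inj_on (\<lambda>(y, h). h(j := y)) ({-1,1::real} \<times> signs J)"
  proof (rule inj_onI, clarify)
    fix y h y' h'
    assume a: "y \<in> {-1,1::real}" "h \<in> signs J" "y' \<in> {-1,1}" "h' \<in> signs J" "h(j := y) = h'(j := y')"
    from a(5) have "y = y'" by (metis fun_upd_same)
    moreover have "h = h'"
    proof
      fix x show "h x = h' x"
        using a assms(2) unfolding signs_def
        by (cases "x = j") (auto simp: PiE_def extensional_def dest: fun_cong[where x = x])
    qed
    ultimately show "y = y' \<and> h = h'" by simp
  qed
  have "(\<Sum>\<epsilon>\<in>signs (insert j J). g \<epsilon>) = (\<Sum>p\<in>{-1,1} \<times> signs J. g ((\<lambda>(y, h). h(j := y)) p))"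
    unfolding si sum.reindex[OF inj] by (intro sum.cong) auto
  also have "\<dots> = (\<Sum>y\<in>{-1,1}. \<Sum>h\<in>signs J. g (h(j := y)))"
    by (simp add: sum.cartesian_product prod.case_distrib)
  also have "\<dots> = (\<Sum>h\<in>signs J. g (h(j := 1))) + (\<Sum>h\<in>signs J. g (h(j := -1)))"
    by simp
  finally show ?thesis
    unfolding avg_def using assms by (simp add: field_simps)
qed

definition flip :: "nat \<Rightarrow> (nat \<Rightarrow> real) \<Rightarrow> (nat \<Rightarrow> real)" where
  "flip l \<epsilon> = \<epsilon>(l := - \<epsilon> l)"

lemma flip_signs: "l \<in> J \<Longrightarrow> \<epsilon> \<in> signs J \<Longrightarrow> flip l \<epsilon> \<in> signs J"
  unfolding flip_def signs_def by (auto simp: PiE_iff extensional_def)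

lemma flip_flip: "flip l (flip l \<epsilon>) = \<epsilon>"
  unfolding flip_def by auto

lemma avg_flip: assumes "l \<in> J" shows "avg J (\<lambda>\<epsilon>. g (flip l \<epsilon>)) = avg J g"
  unfolding avg_def
  by (rule arg_cong[where f = "\<lambda>x. x / _"], rule sum.reindex_bij_witness[where i = "flip l" and j = "flip l"])
     (auto simp: flip_flip flip_signs assms)

lemma avg_odd:
  assumes "l \<in> J" "\<And>\<epsilon>. \<epsilon> \<in> signs J \<Longrightarrow> g (flip l \<epsilon>) = - g \<epsilon>"
  shows "avg J g = 0"
proof -
  have "avg J g = avg J (\<lambda>\<epsilon>. g (flip l \<epsilon>))" using avg_flip[OF assms(1)] by simp
  also have "\<dots> = avg J (\<lambda>\<epsilon>. - g \<epsilon>)" by (rule avg_cong) (use assms in auto)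
  also have "\<dots> = - avg J g" using avg_cmult[of J "-1" g] by simp
  finally show ?thesis by simp
qed

definition smul :: "nat set \<Rightarrow> (nat \<Rightarrow> real) \<Rightarrow> (nat \<Rightarrow> real) \<Rightarrow> (nat \<Rightarrow> real)" where
  "smul J \<delta> \<epsilon> = restrict (\<lambda>j. \<delta> j * \<epsilon> j) J"

lemma smul_signs: assumes "\<delta> \<in> signs J" "\<epsilon> \<in> signs J" shows "smul J \<delta> \<epsilon> \<in> signs J"
proof -
  have "\<And>j. j \<in> J \<Longrightarrow> \<delta> j * \<epsilon> j \<in> {-1,1}" using signs_val[OF assms(1)] signs_val[OF assms(2)] by fastforce
  then show ?thesis unfolding smul_def signs_def by auto
qed

lemma smul_smul: assumes "\<delta> \<in> signs J" "\<epsilon> \<in> signs J" shows "smul J \<delta> (smul J \<delta> \<epsilon>) = \<epsilon>"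
proof
  fix x show "smul J \<delta> (smul J \<delta> \<epsilon>) x = \<epsilon> x"
    using signs_sq[OF assms(1), of x] signs_out[OF assms(2), of x] unfolding smul_def
    by (cases "x \<in> J") (auto simp: mult.assoc[symmetric])
qed

lemma avg_smul: assumes "\<delta> \<in> signs J" shows "avg J (\<lambda>\<epsilon>. g (smul J \<delta> \<epsilon>)) = avg J g"
  unfolding avg_def
  by (rule arg_cong[where f = "\<lambda>x. x / _"], rule sum.reindex_bij_witness[where i = "smul J \<delta>" and j = "smul J \<delta>"])
     (auto simp: smul_smul smul_signs assms)

lemma avg_prod2: assumes "finite J" "j \<in> J" "l \<in> J"
  shows "avg J (\<lambda>\<epsilon>. \<epsilon> j * \<epsilon> l) = (if j = l then 1 else 0)"
proof (cases "j = l")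
  case True
  then show ?thesis using avg_cong[of J "\<lambda>\<epsilon>. \<epsilon> j * \<epsilon> l" "\<lambda>_. 1"] signs_sq assms avg_const by auto
next
  case False
  show ?thesis using False
    by (simp, intro avg_odd[OF assms(3)]) (auto simp: flip_def)
qed

lemma avg_second:
  assumes "finite J"
  shows "avg J (\<lambda>\<epsilon>. (\<Sum>j\<in>J. \<epsilon> j * c j)\<^sup>2) = (\<Sum>j\<in>J. (c j)\<^sup>2)"
proof -
  have "avg J (\<lambda>\<epsilon>. (\<Sum>j\<in>J. \<epsilon> j * c j)\<^sup>2) = avg J (\<lambda>\<epsilon>. \<Sum>j\<in>J. \<Sum>l\<in>J. (c j * c l) * (\<epsilon> j * \<epsilon> l))"
    by (rule avg_cong) (simp add: power2_eq_square sum_product algebra_simps)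
  also have "\<dots> = (\<Sum>j\<in>J. \<Sum>l\<in>J. (c j * c l) * avg J (\<lambda>\<epsilon>. \<epsilon> j * \<epsilon> l))"
    by (simp add: avg_sum avg_cmult)
  also have "\<dots> = (\<Sum>j\<in>J. \<Sum>l\<in>J. (c j * c l) * (if j = l then 1 else 0))"
    by (intro sum.cong refl) (simp add: avg_prod2 assms)
  also have "\<dots> = (\<Sum>j\<in>J. (c j)\<^sup>2)"
    using assms by (simp add: power2_eq_square if_distrib sum.delta cong: if_cong)
  finally show ?thesis .
qed


lemma sum_upd_insert:
  assumes "finite J" "j \<notin> J"
  shows "(\<Sum>i\<in>insert j J. (\<epsilon>(j := s)) i * c i) = s * c j + (\<Sum>i\<in>J. \<epsilon> i * c i)"
proof -
  have "(\<Sum>i\<in>J. (\<epsilon>(j := s)) i * c i) = (\<Sum>i\<in>J. \<epsilon> i * c i)"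
    using assms(2) by (intro sum.cong) auto
  then show ?thesis using assms by simp
qed

lemma avg_fourth:
  assumes "finite J"
  shows "avg J (\<lambda>\<epsilon>. (\<Sum>j\<in>J. \<epsilon> j * c j) ^ 4) \<le> 3 * (\<Sum>j\<in>J. (c j)\<^sup>2)\<^sup>2"
  using assms
proof (induction J rule: finite_induct)
  case empty
  then show ?case by (simp add: avg_const)
next
  case (insert j J)
  define S where "S \<epsilon> = (\<Sum>i\<in>J. \<epsilon> i * c i)" for \<epsilon>
  define \<sigma> where "\<sigma> = (\<Sum>i\<in>J. (c i)\<^sup>2)"
  have "avg (insert j J) (\<lambda>\<epsilon>. (\<Sum>i\<in>insert j J. \<epsilon> i * c i) ^ 4)
     = (avg J (\<lambda>\<epsilon>. (c j + S \<epsilon>) ^ 4) + avg J (\<lambda>\<epsilon>. (- c j + S \<epsilon>) ^ 4)) / 2"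
    unfolding avg_insert[OF insert(1,2)] sum_upd_insert[OF insert(1,2)] S_def by simp
  also have "\<dots> = avg J (\<lambda>\<epsilon>. S \<epsilon> ^ 4 + 6 * (c j)\<^sup>2 * (S \<epsilon>)\<^sup>2 + (c j) ^ 4)"
  proof -
    have "avg J (\<lambda>\<epsilon>. (c j + S \<epsilon>) ^ 4) + avg J (\<lambda>\<epsilon>. (- c j + S \<epsilon>) ^ 4)
        = avg J (\<lambda>\<epsilon>. (c j + S \<epsilon>) ^ 4 + (- c j + S \<epsilon>) ^ 4)" by (simp add: avg_add)
    also have "\<dots> = avg J (\<lambda>\<epsilon>. 2 * (S \<epsilon> ^ 4 + 6 * (c j)\<^sup>2 * (S \<epsilon>)\<^sup>2 + (c j) ^ 4))"
      by (rule avg_cong) (simp add: power2_eq_square power4_eq_xxxx algebra_simps)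
    also have "\<dots> = 2 * avg J (\<lambda>\<epsilon>. S \<epsilon> ^ 4 + 6 * (c j)\<^sup>2 * (S \<epsilon>)\<^sup>2 + (c j) ^ 4)"
      by (rule avg_cmult)
    finally show ?thesis by simp
  qed
  also have "\<dots> = avg J (\<lambda>\<epsilon>. S \<epsilon> ^ 4) + 6 * (c j)\<^sup>2 * \<sigma> + (c j) ^ 4"
    unfolding avg_add avg_cmult avg_const[OF insert(1)] \<sigma>_def S_def avg_second[OF insert(1)] by simp
  also have "\<dots> \<le> 3 * \<sigma>\<^sup>2 + 6 * (c j)\<^sup>2 * \<sigma> + (c j) ^ 4"
    using insert(3) unfolding S_def \<sigma>_def by simp
  also have "\<dots> \<le> 3 * (\<Sum>i\<in>insert j J. (c i)\<^sup>2)\<^sup>2"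
  proof -
    have "0 \<le> \<sigma>" unfolding \<sigma>_def by (simp add: sum_nonneg)
    have "(\<Sum>i\<in>insert j J. (c i)\<^sup>2) = (c j)\<^sup>2 + \<sigma>" using insert(1,2) \<sigma>_def by simp
    moreover have "0 \<le> (c j * c j) * (c j * c j)" by simp
    ultimately show ?thesis using \<open>0 \<le> \<sigma>\<close>
      by (simp add: power2_eq_square power4_eq_xxxx algebra_simps)
  qed
  finally show ?case .
qed

lemma avg_cs:
  assumes "finite J"
  shows "avg J (\<lambda>\<epsilon>. f \<epsilon> * g \<epsilon>) \<le> sqrt (avg J (\<lambda>\<epsilon>. (f \<epsilon>)\<^sup>2)) * sqrt (avg J (\<lambda>\<epsilon>. (g \<epsilon>)\<^sup>2))"
proof -
  let ?N = "2 ^ card J :: real"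
  have N: "?N > 0" by simp
  have "(\<Sum>\<epsilon>\<in>signs J. f \<epsilon> * g \<epsilon>) \<le> sqrt (\<Sum>\<epsilon>\<in>signs J. (f \<epsilon>)\<^sup>2) * sqrt (\<Sum>\<epsilon>\<in>signs J. (g \<epsilon>)\<^sup>2)"
  proof -
    have "(\<Sum>\<epsilon>\<in>signs J. f \<epsilon> * g \<epsilon>) \<le> \<bar>\<Sum>\<epsilon>\<in>signs J. f \<epsilon> * g \<epsilon>\<bar>" by simp
    also have "\<dots> = sqrt ((\<Sum>\<epsilon>\<in>signs J. f \<epsilon> * g \<epsilon>)\<^sup>2)" by simp
    also have "\<dots> \<le> sqrt ((\<Sum>\<epsilon>\<in>signs J. (f \<epsilon>)\<^sup>2) * (\<Sum>\<epsilon>\<in>signs J. (g \<epsilon>)\<^sup>2))"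
      by (rule real_sqrt_le_mono, rule Cauchy_Schwarz_ineq_sum)
    finally show ?thesis by (simp add: real_sqrt_mult)
  qed
  then have "(\<Sum>\<epsilon>\<in>signs J. f \<epsilon> * g \<epsilon>) / ?N \<le> sqrt (\<Sum>\<epsilon>\<in>signs J. (f \<epsilon>)\<^sup>2) * sqrt (\<Sum>\<epsilon>\<in>signs J. (g \<epsilon>)\<^sup>2) / ?N"
    by (rule divide_right_mono) simp
  also have "\<dots> = sqrt ((\<Sum>\<epsilon>\<in>signs J. (f \<epsilon>)\<^sup>2) / ?N) * sqrt ((\<Sum>\<epsilon>\<in>signs J. (g \<epsilon>)\<^sup>2) / ?N)"
    using N by (simp add: real_sqrt_divide real_sqrt_mult[symmetric])
  finally show ?thesis unfolding avg_def .
qed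

lemma khintchine:
  assumes "finite J"
  shows "sqrt (\<Sum>j\<in>J. (c j)\<^sup>2) \<le> sqrt 3 * avg J (\<lambda>\<epsilon>. \<bar>\<Sum>j\<in>J. \<epsilon> j * c j\<bar>)"
proof -
  define S where "S \<epsilon> = (\<Sum>j\<in>J. \<epsilon> j * c j)" for \<epsilon>
  define \<sigma> where "\<sigma> = sqrt (\<Sum>j\<in>J. (c j)\<^sup>2)"
  define a where "a = avg J (\<lambda>\<epsilon>. \<bar>S \<epsilon>\<bar>)"
  have s0: "\<sigma> \<ge> 0" unfolding \<sigma>_def by (simp add: sum_nonneg)
  have a0: "a \<ge> 0" unfolding a_def by (rule avg_nonneg) simp
  have m2: "avg J (\<lambda>\<epsilon>. (S \<epsilon>)\<^sup>2) = \<sigma>\<^sup>2"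
    unfolding S_def \<sigma>_def avg_second[OF assms] by (simp add: sum_nonneg)
  have m4: "avg J (\<lambda>\<epsilon>. (S \<epsilon>) ^ 4) \<le> 3 * \<sigma> ^ 4"
  proof -
    have "sqrt (\<Sum>j\<in>J. (c j)\<^sup>2) ^ 4 = (sqrt (\<Sum>j\<in>J. (c j)\<^sup>2) ^ 2) ^ 2"
      by (simp add: power_mult[symmetric])
    also have "\<dots> = (\<Sum>j\<in>J. (c j)\<^sup>2)\<^sup>2" by (simp add: sum_nonneg)
    finally show ?thesis using avg_fourth[OF assms, of c] unfolding S_def \<sigma>_def by simp
  qed
  have m3: "avg J (\<lambda>\<epsilon>. \<bar>S \<epsilon>\<bar> ^ 3) \<le> \<sigma> * (sqrt 3 * \<sigma>\<^sup>2)"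
  proof -
    have "avg J (\<lambda>\<epsilon>. \<bar>S \<epsilon>\<bar> ^ 3) = avg J (\<lambda>\<epsilon>. \<bar>S \<epsilon>\<bar> * (S \<epsilon>)\<^sup>2)"
      by (rule avg_cong) (simp add: power2_eq_square power3_eq_cube)
    also have "\<dots> \<le> sqrt (avg J (\<lambda>\<epsilon>. \<bar>S \<epsilon>\<bar>\<^sup>2)) * sqrt (avg J (\<lambda>\<epsilon>. ((S \<epsilon>)\<^sup>2)\<^sup>2))"
      by (rule avg_cs[OF assms])
    also have "\<dots> \<le> \<sigma> * (sqrt 3 * \<sigma>\<^sup>2)"
    proof (rule mult_mono)
      show "sqrt (avg J (\<lambda>\<epsilon>. \<bar>S \<epsilon>\<bar>\<^sup>2)) \<le> \<sigma>" using m2 s0 by simp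
      have "sqrt (avg J (\<lambda>\<epsilon>. ((S \<epsilon>)\<^sup>2)\<^sup>2)) \<le> sqrt (3 * \<sigma> ^ 4)"
        using m4 by (simp add: power_mult[symmetric])
      also have "\<dots> = sqrt 3 * \<sigma>\<^sup>2"
      proof -
        have "\<sigma> ^ 4 = (\<sigma>\<^sup>2)\<^sup>2" by (simp add: power_mult[symmetric])
        then have "sqrt (\<sigma> ^ 4) = \<bar>\<sigma>\<^sup>2\<bar>" by (simp only: real_sqrt_abs)
        then have "sqrt (\<sigma> ^ 4) = \<sigma>\<^sup>2" by simp
        then show ?thesis by (simp add: real_sqrt_mult)
      qed
      finally show "sqrt (avg J (\<lambda>\<epsilon>. ((S \<epsilon>)\<^sup>2)\<^sup>2)) \<le> sqrt 3 * \<sigma>\<^sup>2" .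
    qed (use s0 in \<open>auto intro!: avg_nonneg simp: zero_le_even_power\<close>)
    finally show ?thesis .
  qed
  have "\<sigma>\<^sup>2 = avg J (\<lambda>\<epsilon>. sqrt \<bar>S \<epsilon>\<bar> * (\<bar>S \<epsilon>\<bar> * sqrt \<bar>S \<epsilon>\<bar>))"
    unfolding m2[symmetric]
  proof (rule avg_cong)
    fix \<epsilon>
    have "sqrt \<bar>S \<epsilon>\<bar> * (\<bar>S \<epsilon>\<bar> * sqrt \<bar>S \<epsilon>\<bar>) = \<bar>S \<epsilon>\<bar> * (sqrt \<bar>S \<epsilon>\<bar> * sqrt \<bar>S \<epsilon>\<bar>)"
      by (simp add: mult_ac)
    also have "\<dots> = (S \<epsilon>)\<^sup>2" by (simp add: power2_eq_square)
    finally show "(S \<epsilon>)\<^sup>2 = sqrt \<bar>S \<epsilon>\<bar> * (\<bar>S \<epsilon>\<bar> * sqrt \<bar>S \<epsilon>\<bar>)" by simp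
  qed
  also have "\<dots> \<le> sqrt (avg J (\<lambda>\<epsilon>. (sqrt \<bar>S \<epsilon>\<bar>)\<^sup>2)) * sqrt (avg J (\<lambda>\<epsilon>. (\<bar>S \<epsilon>\<bar> * sqrt \<bar>S \<epsilon>\<bar>)\<^sup>2))"
    by (rule avg_cs[OF assms])
  also have "avg J (\<lambda>\<epsilon>. (sqrt \<bar>S \<epsilon>\<bar>)\<^sup>2) = a" unfolding a_def by (rule avg_cong) simp
  also have "avg J (\<lambda>\<epsilon>. (\<bar>S \<epsilon>\<bar> * sqrt \<bar>S \<epsilon>\<bar>)\<^sup>2) = avg J (\<lambda>\<epsilon>. \<bar>S \<epsilon>\<bar> ^ 3)"
  proof (rule avg_cong)
    fix \<epsilon>
    have "(\<bar>S \<epsilon>\<bar> * sqrt \<bar>S \<epsilon>\<bar>)\<^sup>2 = \<bar>S \<epsilon>\<bar>\<^sup>2 * (sqrt \<bar>S \<epsilon>\<bar>)\<^sup>2" by (rule power_mult_distrib)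
    also have "\<dots> = \<bar>S \<epsilon>\<bar> ^ 3" by (simp add: power2_eq_square power3_eq_cube)
    finally show "(\<bar>S \<epsilon>\<bar> * sqrt \<bar>S \<epsilon>\<bar>)\<^sup>2 = \<bar>S \<epsilon>\<bar> ^ 3" .
  qed
  finally have key: "\<sigma>\<^sup>2 \<le> sqrt a * sqrt (\<sigma> * (sqrt 3 * \<sigma>\<^sup>2))"
    using m3 by (meson a0 mult_left_mono order_trans real_sqrt_ge_zero real_sqrt_le_mono)
  show ?thesis
  proof (cases "\<sigma> = 0")
    case True then show ?thesis using a0 unfolding \<sigma>_def a_def S_def by simp
  next
    case False
    then have sp: "\<sigma> > 0" using s0 by simp
    from key have "(\<sigma>\<^sup>2)\<^sup>2 \<le> (sqrt a * sqrt (\<sigma> * (sqrt 3 * \<sigma>\<^sup>2)))\<^sup>2"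
      by (rule power_mono) simp
    also have "(sqrt a * sqrt (\<sigma> * (sqrt 3 * \<sigma>\<^sup>2)))\<^sup>2 = a * (\<sigma> * (sqrt 3 * \<sigma>\<^sup>2))"
      unfolding power_mult_distrib using a0 s0 by simp
    finally have "\<sigma> ^ 4 \<le> a * (\<sigma> ^ 3 * sqrt 3)"
      by (simp add: power2_eq_square power3_eq_cube power4_eq_xxxx mult_ac)
    then have "\<sigma> * \<sigma> ^ 3 \<le> (sqrt 3 * a) * \<sigma> ^ 3" by (simp add: power4_eq_xxxx power3_eq_cube mult_ac)
    then have "\<sigma> \<le> sqrt 3 * a" using sp by (simp add: mult_le_cancel_right)
    then show ?thesis unfolding \<sigma>_def a_def S_def .
  qed
qed


definition hb_ok :: "('a::real_normed_vector \<times> real) set \<Rightarrow> bool" where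
  "hb_ok G \<longleftrightarrow> subspace G \<and> (\<forall>x a. (x, a) \<in> G \<longrightarrow> a \<le> norm x)"

lemma hb_chain_union:
  assumes C: "C \<in> chains {G. hb_ok G \<and> G0 \<subseteq> G}" and ne: "C \<noteq> {}"
  shows "hb_ok (\<Union>C) \<and> G0 \<subseteq> \<Union>C"
proof -
  have sub: "C \<subseteq> {G. hb_ok G \<and> G0 \<subseteq> G}" and ch: "\<forall>A\<in>C. \<forall>B\<in>C. A \<subseteq> B \<or> B \<subseteq> A"
    using C unfolding chains_def chain_subset_def by auto
  obtain G1 where G1: "G1 \<in> C" using ne by auto
  have "subspace (\<Union>C)"
    unfolding subspace_def
  proof (intro conjI ballI allI)
    show "0 \<in> \<Union>C" using G1 sub unfolding hb_ok_def subspace_def by blast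
  next
    fix x y assume "x \<in> \<Union>C" "y \<in> \<Union>C"
    then obtain A B where AB: "A \<in> C" "B \<in> C" "x \<in> A" "y \<in> B" by auto
    show "x + y \<in> \<Union>C"
    proof (cases "A \<subseteq> B")
      case True
      then have "x + y \<in> B" using AB sub unfolding hb_ok_def subspace_def by blast
      then show ?thesis using AB by auto
    next
      case False
      then have "B \<subseteq> A" using ch AB by blast
      then have "x + y \<in> A" using AB sub unfolding hb_ok_def subspace_def by blast
      then show ?thesis using AB by auto
    qed
  next
    fix c and x :: "'a \<times> real" assume "x \<in> \<Union>C"
    then obtain A where "A \<in> C" "x \<in> A" by auto
    then have "c *\<^sub>R x \<in> A" using sub unfolding hb_ok_def subspace_def by blast
    then show "c *\<^sub>R x \<in> \<Union>C" using \<open>A \<in> C\<close> by auto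
  qed
  moreover have "\<forall>x a. (x, a) \<in> \<Union>C \<longrightarrow> a \<le> norm x" using sub unfolding hb_ok_def by blast
  moreover have "G0 \<subseteq> \<Union>C" using G1 sub by blast
  ultimately show ?thesis unfolding hb_ok_def by blast
qed

lemma hb_extend_step:
  fixes M :: "('a::real_normed_vector \<times> real) set"
  assumes ok: "hb_ok M" and x0: "\<forall>a. (x0, a) \<notin> M"
  shows "\<exists>M'. hb_ok M' \<and> M \<subseteq> M' \<and> M' \<noteq> M"
proof -
  have sM: "subspace M" and bnd: "\<And>x a. (x, a) \<in> M \<Longrightarrow> a \<le> norm x" using ok unfolding hb_ok_def by auto
  have zero: "(0, 0) \<in> M" using sM unfolding subspace_def by (simp add: zero_prod_def)
  have addM: "(x + z, a + b) \<in> M" if "(x, a) \<in> M" "(z, b) \<in> M" for x z a b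
    using sM that unfolding subspace_def by (metis add_Pair)
  have scM: "(r *\<^sub>R x, r * a) \<in> M" if "(x, a) \<in> M" for r x a
    using sM that unfolding subspace_def by (metis scaleR_Pair real_scaleR_def)
  define L where "L = {a - norm (x - x0) | x a. (x, a) \<in> M}"
  define c where "c = Sup L"
  have cross: "a - norm (x - x0) \<le> norm (z + x0) - b" if "(x, a) \<in> M" "(z, b) \<in> M" for x a z b
  proof -
    have "a + b \<le> norm (x + z)" using bnd[OF addM[OF that]] .
    also have "\<dots> = norm ((x - x0) + (z + x0))" by (simp add: algebra_simps)
    also have "\<dots> \<le> norm (x - x0) + norm (z + x0)" by (rule norm_triangle_ineq)
    finally show ?thesis by simp
  qed
  have Lne: "L \<noteq> {}" using zero unfolding L_def by blast
  have Lbdd: "bdd_above L" unfolding L_def bdd_above_def using cross[OF _ zero] by fastforce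
  have cup: "a - norm (x - x0) \<le> c" if "(x, a) \<in> M" for x a
    unfolding c_def by (rule cSup_upper[OF _ Lbdd]) (use that L_def in blast)
  have clow: "c \<le> norm (z + x0) - b" if "(z, b) \<in> M" for z b
    unfolding c_def by (rule cSup_least[OF Lne]) (use cross[OF _ that] L_def in blast)
  define M' where "M' = {(x + t *\<^sub>R x0, a + t * c) | x a t. (x, a) \<in> M}"
  have "subspace M'"
    unfolding subspace_def
  proof (intro conjI ballI allI)
    show "0 \<in> M'" unfolding M'_def using zero by (force simp: zero_prod_def)
  next
    fix p q assume "p \<in> M'" "q \<in> M'"
    then obtain x a t y b s where pq: "(x, a) \<in> M" "(y, b) \<in> M"
      "p = (x + t *\<^sub>R x0, a + t * c)" "q = (y + s *\<^sub>R x0, b + s * c)" unfolding M'_def by blast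
    have "p + q = ((x + y) + (t + s) *\<^sub>R x0, (a + b) + (t + s) * c)"
      using pq by (simp add: algebra_simps)
    then show "p + q \<in> M'" unfolding M'_def using addM[OF pq(1,2)] by blast
  next
    fix r p assume "p \<in> M'"
    then obtain x a t where pq: "(x, a) \<in> M" "p = (x + t *\<^sub>R x0, a + t * c)" unfolding M'_def by blast
    have "r *\<^sub>R p = (r *\<^sub>R x + (r * t) *\<^sub>R x0, r * a + (r * t) * c)"
      using pq by (simp add: algebra_simps)
    then show "r *\<^sub>R p \<in> M'" unfolding M'_def using scM[OF pq(1)] by blast
  qed
  moreover have "\<forall>y e. (y, e) \<in> M' \<longrightarrow> e \<le> norm y"
  proof (intro allI impI)
    fix y e assume "(y, e) \<in> M'"
    then obtain x a t where xa: "(x, a) \<in> M" "y = x + t *\<^sub>R x0" "e = a + t * c" unfolding M'_def by blast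
    consider "t = 0" | "t > 0" | "t < 0" by linarith
    then show "e \<le> norm y"
    proof cases
      case 1 then show ?thesis using bnd[OF xa(1)] xa by simp
    next
      case 2
      have "c \<le> norm ((1/t) *\<^sub>R x + x0) - (1/t) * a" using clow[OF scM[OF xa(1)]] .
      then have "t * c \<le> t * (norm ((1/t) *\<^sub>R x + x0) - (1/t) * a)" using 2 by simp
      also have "\<dots> = norm (t *\<^sub>R ((1/t) *\<^sub>R x + x0)) - a" using 2 by (simp add: right_diff_distrib)
      also have "t *\<^sub>R ((1/t) *\<^sub>R x + x0) = x + t *\<^sub>R x0" using 2 by (simp add: algebra_simps)
      finally show ?thesis using xa by simp
    next
      case 3
      define s where "s = - t"
      have s: "s > 0" using 3 s_def by simp
      have "(1/s) * a - norm ((1/s) *\<^sub>R x - x0) \<le> c" using cup[OF scM[OF xa(1)]] .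
      then have "s * ((1/s) * a - norm ((1/s) *\<^sub>R x - x0)) \<le> s * c" using s by simp
      moreover have "s * ((1/s) * a - norm ((1/s) *\<^sub>R x - x0)) = a - norm (s *\<^sub>R ((1/s) *\<^sub>R x - x0))"
        using s by (simp add: right_diff_distrib)
      moreover have "s *\<^sub>R ((1/s) *\<^sub>R x - x0) = x + t *\<^sub>R x0" using s by (simp add: algebra_simps s_def)
      ultimately have "a - norm (s *\<^sub>R ((1/s) *\<^sub>R x - x0)) \<le> s * c" by linarith
      also note \<open>s *\<^sub>R ((1/s) *\<^sub>R x - x0) = x + t *\<^sub>R x0\<close>
      finally show ?thesis using xa s_def by simp
    qed
  qed
  ultimately have "hb_ok M'" unfolding hb_ok_def by blast
  moreover have "M \<subseteq> M'" unfolding M'_def by force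
  moreover have "(x0, c) \<in> M'" unfolding M'_def using zero by force
  ultimately show ?thesis using x0 by blast
qed

lemma hahn_banach_graph:
  fixes G0 :: "('a::real_normed_vector \<times> real) set"
  assumes "subspace G0" "\<And>x a. (x, a) \<in> G0 \<Longrightarrow> a \<le> norm x"
  shows "\<exists>\<phi>\<in>dual_ball. \<forall>x a. (x, a) \<in> G0 \<longrightarrow> \<phi> x = a"
proof -
  let ?A = "{G. hb_ok G \<and> G0 \<subseteq> G}"
  have G0A: "G0 \<in> ?A" using assms unfolding hb_ok_def by auto
  have "\<forall>C\<in>chains ?A. \<exists>U\<in>?A. \<forall>X\<in>C. X \<subseteq> U"
  proof
    fix C assume C: "C \<in> chains ?A"
    show "\<exists>U\<in>?A. \<forall>X\<in>C. X \<subseteq> U"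
    proof (cases "C = {}")
      case True then show ?thesis using G0A by blast
    next
      case False then show ?thesis using hb_chain_union[OF C False] by blast
    qed
  qed
  then obtain M where MA: "M \<in> ?A" and max: "\<forall>X\<in>?A. M \<subseteq> X \<longrightarrow> X = M"
    using Zorn_Lemma2[of ?A] by blast
  have ok: "hb_ok M" and G0M: "G0 \<subseteq> M" using MA by auto
  have sM: "subspace M" and bnd: "\<And>x a. (x, a) \<in> M \<Longrightarrow> a \<le> norm x" using ok unfolding hb_ok_def by auto
  have addM: "(x + z, a + b) \<in> M" if "(x, a) \<in> M" "(z, b) \<in> M" for x z a b
    using sM that unfolding subspace_def by (metis add_Pair)
  have scM: "(r *\<^sub>R x, r * a) \<in> M" if "(x, a) \<in> M" for r x a
    using sM that unfolding subspace_def by (metis scaleR_Pair real_scaleR_def)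
  have tot: "\<exists>a. (x, a) \<in> M" for x
  proof (rule ccontr)
    assume "\<not> (\<exists>a. (x, a) \<in> M)"
    then obtain M' where "hb_ok M'" "M \<subseteq> M'" "M' \<noteq> M" using hb_extend_step[OF ok] by blast
    then show False using max G0M by blast
  qed
  have uniq: "a = b" if "(x, a) \<in> M" "(x, b) \<in> M" for x a b
  proof -
    have "(x + (-1) *\<^sub>R x, a + (-1) * b) \<in> M" using addM[OF that(1) scM[OF that(2)]] .
    then have "a - b \<le> 0" using bnd by fastforce
    have "(x + (-1) *\<^sub>R x, b + (-1) * a) \<in> M" using addM[OF that(2) scM[OF that(1)]] .
    then have "b - a \<le> 0" using bnd by fastforce
    then show ?thesis using \<open>a - b \<le> 0\<close> by simp
  qed
  define \<phi> where "\<phi> x = (THE a. (x, a) \<in> M)" for x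
  have phiM: "(x, \<phi> x) \<in> M" for x
    unfolding \<phi>_def using tot[of x] uniq by (metis theI)
  have phi_eq: "\<phi> x = a" if "(x, a) \<in> M" for x a using uniq[OF phiM that] .
  have padd: "\<phi> (x + y) = \<phi> x + \<phi> y" for x y using phi_eq[OF addM[OF phiM phiM]] .
  have psc: "\<phi> (r *\<^sub>R x) = r *\<^sub>R \<phi> x" for r x using phi_eq[OF scM[OF phiM]] by simp
  have pb: "norm (\<phi> x) \<le> norm x" for x
  proof -
    have "\<phi> x \<le> norm x" using bnd[OF phiM] .
    moreover have "- \<phi> x \<le> norm x" using bnd[OF scM[OF phiM, of "-1" x]] by simp
    ultimately show ?thesis by simp
  qed
  have "bounded_linear \<phi>" by (rule bounded_linear_intro[OF padd psc, of 1]) (use pb in simp)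
  moreover have "onorm \<phi> \<le> 1"
  proof (rule onorm_bound)
    fix x show "norm (\<phi> x) \<le> 1 * norm x" using pb[of x] by simp
  qed simp
  ultimately have "\<phi> \<in> dual_ball" unfolding dual_ball_def by simp
  moreover have "\<forall>x a. (x, a) \<in> G0 \<longrightarrow> \<phi> x = a" using G0M phi_eq by blast
  ultimately show ?thesis by blast
qed


lemma lin_expand:
  assumes "linear f"
  shows "f (\<Sum>i\<in>I. t i *\<^sub>R u i) = (\<Sum>i\<in>I. t i *\<^sub>R f (u i))"
proof -
  have "f (\<Sum>i\<in>I. t i *\<^sub>R u i) = (\<Sum>i\<in>I. f (t i *\<^sub>R u i))" by (rule linear_sum[OF assms])
  also have "\<dots> = (\<Sum>i\<in>I. t i *\<^sub>R f (u i))" by (simp add: linear_scale[OF assms])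
  finally show ?thesis .
qed

definition Vset :: "nat \<Rightarrow> (nat \<Rightarrow> 'a::real_vector) \<Rightarrow> 'a set" where
  "Vset n u = {\<Sum>i<n. s i *\<^sub>R u i | s. \<forall>i. \<bar>s i\<bar> \<le> 1}"

definition avgv :: "nat set \<Rightarrow> (nat \<Rightarrow> 'b::real_normed_vector) \<Rightarrow> real" where
  "avgv J a = avg J (\<lambda>\<epsilon>. norm (\<Sum>j\<in>J. \<epsilon> j *\<^sub>R a j))"

definition Fk :: "nat \<Rightarrow> nat set \<Rightarrow> (nat \<Rightarrow> 'b::real_normed_vector) \<Rightarrow> real" where
  "Fk k J a = (if k = 0 then norm (\<Sum>j\<in>J. a j) else avgv J a)"

lemma avg_Fk:
  assumes "finite J"
  shows "avg J (\<lambda>\<epsilon>. Fk k J (\<lambda>j. \<epsilon> j *\<^sub>R a j)) = Fk (Suc k) J a"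
proof (cases "k = 0")
  case True then show ?thesis by (simp add: Fk_def avgv_def)
next
  case False
  have "avg J (\<lambda>\<epsilon>. Fk k J (\<lambda>j. \<epsilon> j *\<^sub>R a j)) = avg J (\<lambda>\<epsilon>. avgv J a)"
  proof (rule avg_cong)
    fix \<epsilon> assume e: "\<epsilon> \<in> signs J"
    have "Fk k J (\<lambda>j. \<epsilon> j *\<^sub>R a j) = avg J (\<lambda>\<delta>. norm (\<Sum>j\<in>J. (smul J \<epsilon> \<delta>) j *\<^sub>R a j))"
      using False unfolding Fk_def avgv_def smul_def
      by (simp add: mult.commute)
    also have "\<dots> = avgv J a" unfolding avgv_def by (rule avg_smul[OF e])
    finally show "Fk k J (\<lambda>j. \<epsilon> j *\<^sub>R a j) = avgv J a" .
  qed
  also have "\<dots> = Fk (Suc k) J a" using assms by (simp add: avg_const Fk_def)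
  finally show ?thesis .
qed

lemma sum_cs_w:
  fixes t c :: "nat \<Rightarrow> real"
  assumes "(\<Sum>j\<in>J. (t j)\<^sup>2) \<le> w\<^sup>2" "w \<ge> 0"
  shows "(\<Sum>j\<in>J. t j * c j) \<le> w * sqrt (\<Sum>j\<in>J. (c j)\<^sup>2)"
proof -
  have "(\<Sum>j\<in>J. t j * c j) \<le> sqrt ((\<Sum>j\<in>J. t j * c j)\<^sup>2)" by simp
  also have "\<dots> \<le> sqrt ((\<Sum>j\<in>J. (t j)\<^sup>2) * (\<Sum>j\<in>J. (c j)\<^sup>2))"
    by (rule real_sqrt_le_mono, rule Cauchy_Schwarz_ineq_sum)
  also have "\<dots> = sqrt (\<Sum>j\<in>J. (t j)\<^sup>2) * sqrt (\<Sum>j\<in>J. (c j)\<^sup>2)" by (simp add: real_sqrt_mult)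
  also have "\<dots> \<le> w * sqrt (\<Sum>j\<in>J. (c j)\<^sup>2)"
    by (rule mult_right_mono) (use assms real_sqrt_le_mono[OF assms(1)] in \<open>auto simp: sum_nonneg\<close>)
  finally show ?thesis .
qed

lemma gt_multi:
  fixes A :: "(nat \<Rightarrow> 'a::real_normed_vector) \<Rightarrow> 'b::real_inner" and u :: "nat \<Rightarrow> 'a"
  assumes J: "finite J" and w: "w \<ge> 0"
    and dep: "\<forall>v v'. (\<forall>l<k. v l = v' l) \<longrightarrow> A v = A v'"
    and lin: "\<forall>l<k. \<forall>v. linear (\<lambda>z. A (v(l := z)))"
    and bnd: "\<forall>v. (\<forall>l<k. v l \<in> Vset n u) \<longrightarrow> norm (A v) \<le> M"
    and coef: "\<forall>l<k. \<forall>j\<in>J. y l j = (\<Sum>i<n. t l j i *\<^sub>R u i)"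
    and wt: "\<forall>l<k. \<forall>i<n. (\<Sum>j\<in>J. (t l j i)\<^sup>2) \<le> w\<^sup>2"
  shows "(\<Sum>j\<in>J. inner (A (\<lambda>l. y l j)) (a j)) \<le> sqrt 3 ^ k * M * w ^ k * Fk k J a"
  using dep lin bnd coef wt
proof (induction k arbitrary: A a)
  case 0
  define z where "z = A (\<lambda>_. 0)"
  have Az: "A v = z" for v using "0.prems"(1) unfolding z_def by auto
  have "(\<Sum>j\<in>J. inner (A (\<lambda>l. y l j)) (a j)) = inner z (\<Sum>j\<in>J. a j)"
    by (simp add: Az inner_sum_right)
  also have "\<dots> \<le> norm z * norm (\<Sum>j\<in>J. a j)" by (rule norm_cauchy_schwarz)
  also have "\<dots> \<le> M * norm (\<Sum>j\<in>J. a j)"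
    by (rule mult_right_mono) (use "0.prems"(3) z_def in auto)
  finally show ?case by (simp add: Fk_def)
next
  case (Suc k)
  note dep = Suc.prems(1) and lin = Suc.prems(2) and bnd = Suc.prems(3)
    and coef = Suc.prems(4) and wt = Suc.prems(5)
  define Y where "Y j = (\<lambda>l. y l j)" for j
  define c where "c i j = inner (A ((Y j)(k := u i))) (a j)" for i j
  have linK: "linear (\<lambda>z. A ((Y j)(k := z)))" for j using lin lessI by blast
  have expand: "A ((Y j)(k := (\<Sum>i<n. s i *\<^sub>R u i))) = (\<Sum>i<n. s i *\<^sub>R A ((Y j)(k := u i)))" for j s
    using lin_expand[OF linK[of j]] .
  have AY: "A (Y j) = (\<Sum>i<n. t k j i *\<^sub>R A ((Y j)(k := u i)))" if "j \<in> J" for j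
  proof -
    have "Y j = (Y j)(k := (\<Sum>i<n. t k j i *\<^sub>R u i))"
      using coef that unfolding Y_def by (auto simp: fun_eq_iff)
    then show ?thesis using expand[of j "t k j"] by simp
  qed
  have "(\<Sum>j\<in>J. inner (A (Y j)) (a j)) = (\<Sum>j\<in>J. \<Sum>i<n. t k j i * c i j)"
    by (intro sum.cong refl) (simp add: AY c_def inner_sum_left)
  also have "\<dots> = (\<Sum>i<n. \<Sum>j\<in>J. t k j i * c i j)" by (rule sum.swap)
  also have "\<dots> \<le> (\<Sum>i<n. w * (sqrt 3 * avg J (\<lambda>\<epsilon>. \<bar>\<Sum>j\<in>J. \<epsilon> j * c i j\<bar>)))"
  proof (rule sum_mono)
    fix i assume i: "i \<in> {..<n}"
    have "(\<Sum>j\<in>J. t k j i * c i j) \<le> w * sqrt (\<Sum>j\<in>J. (c i j)\<^sup>2)"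
      by (rule sum_cs_w) (use wt i w in auto)
    also have "\<dots> \<le> w * (sqrt 3 * avg J (\<lambda>\<epsilon>. \<bar>\<Sum>j\<in>J. \<epsilon> j * c i j\<bar>))"
      by (rule mult_left_mono[OF khintchine[OF J] w])
    finally show "(\<Sum>j\<in>J. t k j i * c i j) \<le> w * (sqrt 3 * avg J (\<lambda>\<epsilon>. \<bar>\<Sum>j\<in>J. \<epsilon> j * c i j\<bar>))" .
  qed
  also have "\<dots> = w * sqrt 3 * avg J (\<lambda>\<epsilon>. \<Sum>i<n. \<bar>\<Sum>j\<in>J. \<epsilon> j * c i j\<bar>)"
    by (simp add: avg_sum sum_distrib_left mult.assoc)
  also have "w * sqrt 3 * avg J (\<lambda>\<epsilon>. \<Sum>i<n. \<bar>\<Sum>j\<in>J. \<epsilon> j * c i j\<bar>)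
      \<le> w * sqrt 3 * avg J (\<lambda>\<epsilon>. sqrt 3 ^ k * M * w ^ k * Fk k J (\<lambda>j. \<epsilon> j *\<^sub>R a j))"
  proof (rule mult_left_mono[OF avg_mono])
    fix \<epsilon> assume e: "\<epsilon> \<in> signs J"
    define s where "s i = sgn (\<Sum>j\<in>J. \<epsilon> j * c i j)" for i
    define \<sigma> where "\<sigma> = (\<Sum>i<n. s i *\<^sub>R u i)"
    have \<sigma>V: "\<sigma> \<in> Vset n u"
      unfolding Vset_def \<sigma>_def s_def by (intro CollectI exI[of _ "\<lambda>i. sgn (\<Sum>j\<in>J. \<epsilon> j * c i j)"]) (auto simp: abs_sgn_eq)
    have "(\<Sum>i<n. \<bar>\<Sum>j\<in>J. \<epsilon> j * c i j\<bar>) = (\<Sum>i<n. s i * (\<Sum>j\<in>J. \<epsilon> j * c i j))"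
      unfolding s_def by (intro sum.cong refl) (simp add: abs_sgn mult.commute)
    also have "\<dots> = (\<Sum>j\<in>J. \<Sum>i<n. s i * (\<epsilon> j * c i j))"
      by (simp add: sum_distrib_left sum.swap[of _ J])
    also have "\<dots> = (\<Sum>j\<in>J. inner (A ((Y j)(k := \<sigma>))) (\<epsilon> j *\<^sub>R a j))"
      unfolding \<sigma>_def expand
      by (intro sum.cong refl) (simp add: c_def inner_sum_left sum_distrib_left mult.commute mult.left_commute)
    also have "\<dots> \<le> sqrt 3 ^ k * M * w ^ k * Fk k J (\<lambda>j. \<epsilon> j *\<^sub>R a j)"
    proof -
      let ?A' = "\<lambda>v. A (v(k := \<sigma>))"
      have d': "\<forall>v v'. (\<forall>l<k. v l = v' l) \<longrightarrow> ?A' v = ?A' v'"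
      proof (intro allI impI)
        fix v v' :: "nat \<Rightarrow> 'a" assume "\<forall>l<k. v l = v' l"
        then have "\<forall>l<Suc k. (v(k := \<sigma>)) l = (v'(k := \<sigma>)) l" by (auto simp: less_Suc_eq)
        then show "?A' v = ?A' v'" using dep by blast
      qed
      have l': "\<forall>l<k. \<forall>v. linear (\<lambda>z. ?A' (v(l := z)))"
      proof (intro allI impI)
        fix l v assume l: "l < k"
        have "(\<lambda>z. ?A' (v(l := z))) = (\<lambda>z. A ((v(k := \<sigma>))(l := z)))"
          using l by (simp add: fun_upd_twist)
        moreover have "linear (\<lambda>z. A ((v(k := \<sigma>))(l := z)))" using lin l less_SucI by blast
        ultimately show "linear (\<lambda>z. ?A' (v(l := z)))" by simp
      qed
      have b': "\<forall>v. (\<forall>l<k. v l \<in> Vset n u) \<longrightarrow> norm (?A' v) \<le> M"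
      proof (intro allI impI)
        fix v assume "\<forall>l<k. v l \<in> Vset n u"
        then have "\<forall>l<Suc k. (v(k := \<sigma>)) l \<in> Vset n u" using \<sigma>V by (auto simp: less_Suc_eq)
        then show "norm (?A' v) \<le> M" using bnd by blast
      qed
      have "(\<Sum>j\<in>J. inner (?A' (\<lambda>l. y l j)) (\<epsilon> j *\<^sub>R a j)) \<le> sqrt 3 ^ k * M * w ^ k * Fk k J (\<lambda>j. \<epsilon> j *\<^sub>R a j)"
        by (rule Suc.IH[OF d' l' b']) (use coef wt in auto)
      then show ?thesis unfolding Y_def by simp
    qed
    finally show "(\<Sum>i<n. \<bar>\<Sum>j\<in>J. \<epsilon> j * c i j\<bar>) \<le> sqrt 3 ^ k * M * w ^ k * Fk k J (\<lambda>j. \<epsilon> j *\<^sub>R a j)" .  qed (use w in simp)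
  also have "avg J (\<lambda>\<epsilon>. sqrt 3 ^ k * M * w ^ k * Fk k J (\<lambda>j. \<epsilon> j *\<^sub>R a j)) = sqrt 3 ^ k * M * w ^ k * Fk (Suc k) J a"
    by (simp add: avg_cmult avg_Fk[OF J])
  finally show ?case using w unfolding Y_def by (simp add: mult_ac mult_left_mono)
qed


lemma sum_PiE_insert:
  assumes "x \<notin> S"
  shows "(\<Sum>g\<in>PiE (insert x S) T. F g) = (\<Sum>y\<in>T x. \<Sum>g\<in>PiE S T. F (g(x := y)))"
proof -
  have inj: "inj_on (\<lambda>(y, h). h(x := y)) (T x \<times> PiE S T)"
  proof (rule inj_onI, clarify)
    fix y h y' h'
    assume a: "y \<in> T x" "h \<in> PiE S T" "y' \<in> T x" "h' \<in> PiE S T" "h(x := y) = h'(x := y')"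
    from a(5) have "y = y'" by (metis fun_upd_same)
    moreover have "h = h'"
    proof
      fix z show "h z = h' z"
        using a assms by (cases "z = x") (auto simp: PiE_def extensional_def dest: fun_cong[where x = z])
    qed
    ultimately show "y = y' \<and> h = h'" by simp
  qed
  have "(\<Sum>g\<in>PiE (insert x S) T. F g) = (\<Sum>p\<in>T x \<times> PiE S T. F ((\<lambda>(y, h). h(x := y)) p))"
    unfolding PiE_insert_eq sum.reindex[OF inj] by (intro sum.cong) auto
  also have "\<dots> = (\<Sum>y\<in>T x. \<Sum>g\<in>PiE S T. F (g(x := y)))"
    by (simp add: sum.cartesian_product prod.case_distrib)
  finally show ?thesis .
qed

lemma ml_expand_gen:
  fixes A :: "(nat \<Rightarrow> 'a::real_vector) \<Rightarrow> 'b::real_vector"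
  assumes lin: "\<forall>l<k. \<forall>v. linear (\<lambda>z. A (v(l := z)))"
  shows "p \<le> k \<Longrightarrow> A (\<lambda>l. if l < p then (\<Sum>i\<in>I. h l i) else z l)
      = (\<Sum>f\<in>PiE {..<p} (\<lambda>_. I). A (\<lambda>l. if l < p then h l (f l) else z l))"
proof (induction p arbitrary: z)
  case 0
  then show ?case by simp
next
  case (Suc p)
  have pn: "p \<notin> {..<p}" by simp
  define z' where "z' = z(p := (\<Sum>i\<in>I. h p i))"
  define W where "W f = (\<lambda>l. if l < p then h l (f l) else z l)" for f
  have lp: "linear (\<lambda>y. A ((W f)(p := y)))" for f using lin Suc.prems by auto
  have "(\<lambda>l. if l < Suc p then (\<Sum>i\<in>I. h l i) else z l) = (\<lambda>l. if l < p then (\<Sum>i\<in>I. h l i) else z' l)"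
    by (auto simp: z'_def fun_eq_iff less_Suc_eq)
  then have "A (\<lambda>l. if l < Suc p then (\<Sum>i\<in>I. h l i) else z l)
      = (\<Sum>f\<in>PiE {..<p} (\<lambda>_. I). A (\<lambda>l. if l < p then h l (f l) else z' l))"
    using Suc.IH[of z'] Suc.prems by simp
  also have "\<dots> = (\<Sum>f\<in>PiE {..<p} (\<lambda>_. I). A ((W f)(p := (\<Sum>i\<in>I. h p i))))"
    by (intro sum.cong refl arg_cong[where f = A]) (auto simp: W_def z'_def fun_eq_iff)
  also have "\<dots> = (\<Sum>f\<in>PiE {..<p} (\<lambda>_. I). \<Sum>i\<in>I. A ((W f)(p := h p i)))"
    by (intro sum.cong refl) (rule linear_sum[OF lp])
  also have "\<dots> = (\<Sum>i\<in>I. \<Sum>f\<in>PiE {..<p} (\<lambda>_. I). A ((W f)(p := h p i)))"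
    by (rule sum.swap)
  also have "\<dots> = (\<Sum>g\<in>PiE {..<Suc p} (\<lambda>_. I). A (\<lambda>l. if l < Suc p then h l (g l) else z l))"
    using pn unfolding lessThan_Suc sum_PiE_insert[OF pn]
    by (intro sum.cong refl arg_cong[where f = A]) (auto simp: W_def fun_eq_iff less_Suc_eq)
  finally show ?case .
qed

lemma ml_expand:
  fixes A :: "(nat \<Rightarrow> 'a::real_vector) \<Rightarrow> 'b::real_vector"
  assumes dep: "\<forall>v v'. (\<forall>l<k. v l = v' l) \<longrightarrow> A v = A v'"
    and lin: "\<forall>l<k. \<forall>v. linear (\<lambda>z. A (v(l := z)))"
  shows "A (\<lambda>l. \<Sum>i\<in>I. h l i) = (\<Sum>f\<in>PiE {..<k} (\<lambda>_. I). A (\<lambda>l. h l (f l)))"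
proof -
  have "A (\<lambda>l. \<Sum>i\<in>I. h l i) = A (\<lambda>l. if l < k then (\<Sum>i\<in>I. h l i) else 0)"
    using dep by auto
  also have "\<dots> = (\<Sum>f\<in>PiE {..<k} (\<lambda>_. I). A (\<lambda>l. if l < k then h l (f l) else 0))"
    by (rule ml_expand_gen[OF lin order_refl])
  also have "\<dots> = (\<Sum>f\<in>PiE {..<k} (\<lambda>_. I). A (\<lambda>l. h l (f l)))"
    by (intro sum.cong refl) (use dep in auto)
  finally show ?thesis .
qed

lemma ml_scale_gen:
  fixes A :: "(nat \<Rightarrow> 'a::real_vector) \<Rightarrow> 'b::real_vector"
  assumes lin: "\<forall>l<k. \<forall>v. linear (\<lambda>z. A (v(l := z)))"
  shows "p \<le> k \<Longrightarrow> A (\<lambda>l. if l < p then c l *\<^sub>R w l else w l) = (\<Prod>l<p. c l) *\<^sub>R A w"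
proof (induction p)
  case 0 then show ?case by simp
next
  case (Suc p)
  define W where "W = (\<lambda>l. if l < p then c l *\<^sub>R w l else w l)"
  have lp: "linear (\<lambda>y. A (W(p := y)))" using lin Suc.prems by auto
  have "(\<lambda>l. if l < Suc p then c l *\<^sub>R w l else w l) = W(p := c p *\<^sub>R w p)"
    by (auto simp: W_def fun_eq_iff less_Suc_eq)
  then have "A (\<lambda>l. if l < Suc p then c l *\<^sub>R w l else w l) = c p *\<^sub>R A (W(p := w p))"
    using linear_scale[OF lp] by simp
  also have "W(p := w p) = W" by (auto simp: W_def fun_eq_iff)
  finally show ?case using Suc by (simp add: W_def mult.commute)
qed

lemma ml_scale:
  fixes A :: "(nat \<Rightarrow> 'a::real_vector) \<Rightarrow> 'b::real_vector"
  assumes dep: "\<forall>v v'. (\<forall>l<k. v l = v' l) \<longrightarrow> A v = A v'"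
    and lin: "\<forall>l<k. \<forall>v. linear (\<lambda>z. A (v(l := z)))"
  shows "A (\<lambda>l. c l *\<^sub>R w l) = (\<Prod>l<k. c l) *\<^sub>R A w"
proof -
  have "A (\<lambda>l. c l *\<^sub>R w l) = A (\<lambda>l. if l < k then c l *\<^sub>R w l else w l)"
    using dep by auto
  also have "\<dots> = (\<Prod>l<k. c l) *\<^sub>R A w" by (rule ml_scale_gen[OF lin order_refl])
  finally show ?thesis .
qed


definition polar :: "nat \<Rightarrow> ('a::real_vector \<Rightarrow> 'b::real_vector) \<Rightarrow> (nat \<Rightarrow> 'a) \<Rightarrow> 'b" where
  "polar k P v = (1 / (2 ^ k * fact k)) *\<^sub>R
     (\<Sum>\<epsilon>\<in>signs {..<k}. (\<Prod>l<k. \<epsilon> l) *\<^sub>R P (\<Sum>l<k. \<epsilon> l *\<^sub>R v l))"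

definition BF :: "nat \<Rightarrow> (nat \<Rightarrow> nat) set" where
  "BF k = {f \<in> PiE {..<k} (\<lambda>_. {..<k}). bij_betw f {..<k} {..<k}}"

lemma sum_avg: "finite J \<Longrightarrow> (\<Sum>\<epsilon>\<in>signs J. g \<epsilon>) = 2 ^ card J * avg J g"
  unfolding avg_def by simp

lemma sign_coef:
  assumes f: "f \<in> PiE {..<k} (\<lambda>_. {..<k})"
  shows "(\<Sum>\<epsilon>\<in>signs {..<k}. (\<Prod>l<k. \<epsilon> l) * (\<Prod>m<k. \<epsilon> (f m)))
         = (if bij_betw f {..<k} {..<k} then 2 ^ k else 0)"
proof (cases "bij_betw f {..<k} {..<k}")
  case True
  have "(\<Sum>\<epsilon>\<in>signs {..<k}. (\<Prod>l<k. \<epsilon> l) * (\<Prod>m<k. \<epsilon> (f m))) = (\<Sum>\<epsilon>\<in>signs {..<k}. 1)"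
  proof (rule sum.cong[OF refl])
    fix \<epsilon> assume e: "\<epsilon> \<in> signs {..<k}"
    have "(\<Prod>m<k. \<epsilon> (f m)) = (\<Prod>l<k. \<epsilon> l)" by (rule prod.reindex_bij_betw[OF True])
    then have "(\<Prod>l<k. \<epsilon> l) * (\<Prod>m<k. \<epsilon> (f m)) = (\<Prod>l<k. \<epsilon> l * \<epsilon> l)" by (simp add: prod.distrib)
    also have "\<dots> = 1" using signs_sq[OF e] by simp
    finally show "(\<Prod>l<k. \<epsilon> l) * (\<Prod>m<k. \<epsilon> (f m)) = 1" .
  qed
  also have "\<dots> = 2 ^ k" by (simp add: card_signs)
  finally show ?thesis using True by simp
next
  case False
  have sub: "f ` {..<k} \<subseteq> {..<k}" using f by auto
  have "f ` {..<k} \<noteq> {..<k}"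
  proof
    assume eq: "f ` {..<k} = {..<k}"
    then have "inj_on f {..<k}" by (intro finite_surj_inj) auto
    then have "bij_betw f {..<k} {..<k}" using eq unfolding bij_betw_def by simp
    then show False using False by simp
  qed
  then obtain l0 where l0: "l0 < k" "l0 \<notin> f ` {..<k}" using sub by auto
  have "avg {..<k} (\<lambda>\<epsilon>. (\<Prod>l<k. \<epsilon> l) * (\<Prod>m<k. \<epsilon> (f m))) = 0"
  proof (rule avg_odd[of l0])
    show "l0 \<in> {..<k}" using l0 by simp
    fix \<epsilon>
    have p1: "(\<Prod>l<k. flip l0 \<epsilon> l) = - (\<Prod>l<k. \<epsilon> l)"
    proof -
      have "(\<Prod>l<k. flip l0 \<epsilon> l) = flip l0 \<epsilon> l0 * (\<Prod>l\<in>{..<k} - {l0}. flip l0 \<epsilon> l)"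
        using l0 by (intro prod.remove) auto
      also have "(\<Prod>l\<in>{..<k} - {l0}. flip l0 \<epsilon> l) = (\<Prod>l\<in>{..<k} - {l0}. \<epsilon> l)"
        by (intro prod.cong) (auto simp: flip_def)
      also have "flip l0 \<epsilon> l0 = - \<epsilon> l0" by (simp add: flip_def)
      also have "- \<epsilon> l0 * (\<Prod>l\<in>{..<k} - {l0}. \<epsilon> l) = - (\<Prod>l<k. \<epsilon> l)"
        using l0 by (simp add: prod.remove[of "{..<k}" l0])
      finally show ?thesis .
    qed
    have p2: "(\<Prod>m<k. flip l0 \<epsilon> (f m)) = (\<Prod>m<k. \<epsilon> (f m))"
      using l0 by (intro prod.cong) (auto simp: flip_def)
    show "(\<Prod>l<k. flip l0 \<epsilon> l) * (\<Prod>m<k. flip l0 \<epsilon> (f m)) = - ((\<Prod>l<k. \<epsilon> l) * (\<Prod>m<k. \<epsilon> (f m)))"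
      by (simp add: p1 p2)
  qed
  then show ?thesis using False by (simp add: sum_avg)
qed

lemma polar_perm:
  fixes A :: "(nat \<Rightarrow> 'a::real_vector) \<Rightarrow> 'b::real_vector"
  assumes dep: "\<forall>v v'. (\<forall>l<k. v l = v' l) \<longrightarrow> A v = A v'"
    and lin: "\<forall>l<k. \<forall>v. linear (\<lambda>z. A (v(l := z)))"
    and PA: "\<And>x. P x = A (\<lambda>_. x)"
  shows "polar k P v = (1 / fact k) *\<^sub>R (\<Sum>f\<in>BF k. A (\<lambda>m. v (f m)))"
proof -
  let ?K = "{..<k}"
  let ?F = "PiE ?K (\<lambda>_. ?K)"
  have "(\<Sum>\<epsilon>\<in>signs ?K. (\<Prod>l<k. \<epsilon> l) *\<^sub>R P (\<Sum>l<k. \<epsilon> l *\<^sub>R v l))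
      = (\<Sum>\<epsilon>\<in>signs ?K. \<Sum>f\<in>?F. ((\<Prod>l<k. \<epsilon> l) * (\<Prod>m<k. \<epsilon> (f m))) *\<^sub>R A (\<lambda>m. v (f m)))"
  proof (rule sum.cong[OF refl])
    fix \<epsilon>
    have "P (\<Sum>l<k. \<epsilon> l *\<^sub>R v l) = A (\<lambda>m. \<Sum>l<k. \<epsilon> l *\<^sub>R v l)" by (rule PA)
    also have "\<dots> = (\<Sum>f\<in>?F. A (\<lambda>m. \<epsilon> (f m) *\<^sub>R v (f m)))"
      by (rule ml_expand[OF dep lin, where h = "\<lambda>m l. \<epsilon> l *\<^sub>R v l"])
    also have "\<dots> = (\<Sum>f\<in>?F. (\<Prod>m<k. \<epsilon> (f m)) *\<^sub>R A (\<lambda>m. v (f m)))"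
      by (intro sum.cong refl) (rule ml_scale[OF dep lin])
    finally show "(\<Prod>l<k. \<epsilon> l) *\<^sub>R P (\<Sum>l<k. \<epsilon> l *\<^sub>R v l)
        = (\<Sum>f\<in>?F. ((\<Prod>l<k. \<epsilon> l) * (\<Prod>m<k. \<epsilon> (f m))) *\<^sub>R A (\<lambda>m. v (f m)))"
      by (simp add: scaleR_sum_right)
  qed
  also have "\<dots> = (\<Sum>f\<in>?F. (\<Sum>\<epsilon>\<in>signs ?K. (\<Prod>l<k. \<epsilon> l) * (\<Prod>m<k. \<epsilon> (f m))) *\<^sub>R A (\<lambda>m. v (f m)))"
    by (simp add: sum.swap[of _ "signs ?K"] scaleR_sum_left)
  also have "\<dots> = (\<Sum>f\<in>?F. (if bij_betw f ?K ?K then 2 ^ k else 0) *\<^sub>R A (\<lambda>m. v (f m)))"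
    by (intro sum.cong refl) (simp add: sign_coef)
  also have "\<dots> = (\<Sum>f\<in>?F. if bij_betw f ?K ?K then 2 ^ k *\<^sub>R A (\<lambda>m. v (f m)) else 0)"
    by (intro sum.cong refl) simp
  also have "\<dots> = (\<Sum>f\<in>BF k. 2 ^ k *\<^sub>R A (\<lambda>m. v (f m)))"
    unfolding BF_def by (rule sum.inter_filter[symmetric]) (simp add: finite_PiE)
  finally show ?thesis unfolding polar_def by (simp add: scaleR_sum_right[symmetric])
qed

lemma card_BF: "card (BF k) = fact k"
proof -
  let ?K = "{..<k}"
  have "bij_betw (\<lambda>p. restrict p ?K) {p. p permutes ?K} (BF k)"
  proof (rule bij_betw_imageI)
    show "inj_on (\<lambda>p. restrict p ?K) {p. p permutes ?K}"
    proof (rule inj_onI)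
      fix p q assume pq: "p \<in> {p. p permutes ?K}" "q \<in> {p. p permutes ?K}" "restrict p ?K = restrict q ?K"
      show "p = q"
      proof
        fix x show "p x = q x"
          using pq by (cases "x \<in> ?K") (auto simp: permutes_def dest: fun_cong[where x = x])
      qed
    qed
    show "(\<lambda>p. restrict p ?K) ` {p. p permutes ?K} = BF k"
    proof
      show "(\<lambda>p. restrict p ?K) ` {p. p permutes ?K} \<subseteq> BF k"
      proof clarify
        fix p assume p: "p permutes ?K"
        have "bij_betw p ?K ?K" using permutes_imp_bij[OF p] .
        then have "bij_betw (restrict p ?K) ?K ?K" by (rule bij_betw_cong[THEN iffD1, rotated]) simp
        moreover have "restrict p ?K \<in> PiE ?K (\<lambda>_. ?K)" using permutes_in_image[OF p] by auto
        ultimately show "restrict p ?K \<in> BF k" unfolding BF_def by simp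
      qed
      show "BF k \<subseteq> (\<lambda>p. restrict p ?K) ` {p. p permutes ?K}"
      proof
        fix f assume f: "f \<in> BF k"
        define q where "q i = (if i \<in> ?K then f i else i)" for i
        have "bij_betw q ?K ?K" using f unfolding BF_def q_def by (auto intro: bij_betw_cong[THEN iffD1])
        then have "q permutes ?K" by (rule bij_imp_permutes) (simp add: q_def)
        moreover have "restrict q ?K = f" using f unfolding BF_def q_def
          by (auto simp: fun_eq_iff PiE_def extensional_def)
        ultimately show "f \<in> (\<lambda>p. restrict p ?K) ` {p. p permutes ?K}" by force
      qed
    qed
  qed
  then have "card (BF k) = card {p. p permutes ?K}" by (simp add: bij_betw_same_card)
  also have "\<dots> = fact k" by (rule card_permutations) auto
  finally show ?thesis .
qed



lemma polar_diag:
  fixes A :: "(nat \<Rightarrow> 'a::real_vector) \<Rightarrow> 'b::real_vector"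
  assumes dep: "\<forall>v v'. (\<forall>l<k. v l = v' l) \<longrightarrow> A v = A v'"
    and lin: "\<forall>l<k. \<forall>v. linear (\<lambda>z. A (v(l := z)))"
    and PA: "\<And>x. P x = A (\<lambda>_. x)"
  shows "polar k P (\<lambda>_. x) = P x"
proof -
  have pp: "polar k P v = (1 / fact k) *\<^sub>R (\<Sum>f\<in>BF k. A (\<lambda>m. v (f m)))" for v
    by (rule polar_perm[OF dep lin]) (rule PA)
  have "polar k P (\<lambda>_. x) = (1 / fact k) *\<^sub>R (\<Sum>f\<in>BF k. P x)"
    by (simp add: pp PA)
  also have "\<dots> = P x" by (simp add: card_BF sum_constant_scaleR)
  finally show ?thesis .
qed


lemma polar_dep: "\<forall>v v'. (\<forall>l<k. v l = v' l) \<longrightarrow> polar k P v = polar k P v'"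
  unfolding polar_def by simp


lemma linear_scaleR_const:
  assumes "linear g" shows "linear (\<lambda>z. c *\<^sub>R g z)"
  by (rule linearI) (simp_all add: linear_add[OF assms] linear_scale[OF assms] scaleR_add_right)

lemma polar_lin:
  fixes A :: "(nat \<Rightarrow> 'a::real_vector) \<Rightarrow> 'b::real_vector"
  assumes dep: "\<forall>v v'. (\<forall>l<k. v l = v' l) \<longrightarrow> A v = A v'"
    and lin: "\<forall>l<k. \<forall>v. linear (\<lambda>z. A (v(l := z)))"
    and PA: "\<And>x. P x = A (\<lambda>_. x)"
  shows "\<forall>l<k. \<forall>v. linear (\<lambda>z. polar k P (v(l := z)))"
proof (intro allI impI)
  fix l v assume l: "l < k"
  have pp: "polar k P v = (1 / fact k) *\<^sub>R (\<Sum>f\<in>BF k. A (\<lambda>m. v (f m)))" for v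
    by (rule polar_perm[OF dep lin]) (rule PA)
  have tm: "linear (\<lambda>z. A (\<lambda>m. (v(l := z)) (f m)))" if f: "f \<in> BF k" for f
  proof -
    have bij: "bij_betw f {..<k} {..<k}" using f unfolding BF_def by simp
    have "l \<in> f ` {..<k}" using bij l unfolding bij_betw_def by simp
    then obtain m0 where m0: "m0 < k" "f m0 = l" by auto
    have uniq: "m = m0" if "m < k" "f m = l" for m
    proof -
      have "inj_on f {..<k}" using bij unfolding bij_betw_def by simp
      then show ?thesis using that m0 by (auto dest: inj_onD)
    qed
    have eq: "A (\<lambda>m. (v(l := z)) (f m)) = A ((\<lambda>m. v (f m))(m0 := z))" for z
    proof -
      have "\<forall>m<k. (v(l := z)) (f m) = ((\<lambda>m. v (f m))(m0 := z)) m"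
      proof (intro allI impI)
        fix m assume mk: "m < k"
        show "(v(l := z)) (f m) = ((\<lambda>m. v (f m))(m0 := z)) m"
        proof (cases "m = m0")
          case True then show ?thesis by (simp add: m0)
        next
          case False
          then have "f m \<noteq> l" using uniq mk by blast
          then show ?thesis using False by simp
        qed
      qed
      then show ?thesis by (rule dep[THEN spec, THEN spec, THEN mp])
    qed
    show ?thesis unfolding eq by (rule lin[rule_format, OF m0(1)])
  qed
  have "linear (\<lambda>z. \<Sum>f\<in>BF k. A (\<lambda>m. (v(l := z)) (f m)))"
    by (rule linear_compose_sum) (intro ballI tm)
  then have L: "linear (\<lambda>z. (1 / fact k) *\<^sub>R (\<Sum>f\<in>BF k. A (\<lambda>m. (v(l := z)) (f m))))"
    by (rule linear_scaleR_const)
  show "linear (\<lambda>z. polar k P (v(l := z)))"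
    unfolding pp by (rule L)
qed


lemma polar_bound:
  fixes P :: "'a::real_normed_vector \<Rightarrow> 'b::real_normed_vector"
  shows "norm (polar k P v) \<le> (1 / (2 ^ k * fact k)) * (\<Sum>\<epsilon>\<in>signs {..<k}. norm (P (\<Sum>l<k. \<epsilon> l *\<^sub>R v l)))"
proof -
  have "norm (\<Sum>\<epsilon>\<in>signs {..<k}. (\<Prod>l<k. \<epsilon> l) *\<^sub>R P (\<Sum>l<k. \<epsilon> l *\<^sub>R v l))
      \<le> (\<Sum>\<epsilon>\<in>signs {..<k}. norm ((\<Prod>l<k. \<epsilon> l) *\<^sub>R P (\<Sum>l<k. \<epsilon> l *\<^sub>R v l)))"
    by (rule norm_sum)
  also have "\<dots> = (\<Sum>\<epsilon>\<in>signs {..<k}. norm (P (\<Sum>l<k. \<epsilon> l *\<^sub>R v l)))"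
  proof (rule sum.cong[OF refl])
    fix \<epsilon> assume e: "\<epsilon> \<in> signs {..<k}"
    have "\<bar>\<Prod>l<k. \<epsilon> l\<bar> = 1" using signs_abs[OF e] by (simp add: abs_prod)
    then show "norm ((\<Prod>l<k. \<epsilon> l) *\<^sub>R P (\<Sum>l<k. \<epsilon> l *\<^sub>R v l)) = norm (P (\<Sum>l<k. \<epsilon> l *\<^sub>R v l))"
      by simp
  qed
  finally show ?thesis unfolding polar_def by (simp add: divide_simps)
qed


lemma halving:
  fixes h :: "real \<Rightarrow> real"
  assumes h: "h integrable_on {0..1}"
  shows "integral {0..1} h = (integral {0..1} (\<lambda>t. h ((1/2) * t)) + integral {0..1} (\<lambda>t. h ((1/2) * t + 1/2))) / 2"
proof -
  have h1: "h integrable_on {0..1/2}" by (rule integrable_on_subinterval[OF h]) auto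
  have h2: "h integrable_on {1/2..1}" by (rule integrable_on_subinterval[OF h]) auto
  have "((\<lambda>t. h ((1/2) *\<^sub>R t + 0)) has_integral (integral (cbox 0 (1/2)) h /\<^sub>R (1/2) ^ DIM(real)))
          (cbox ((0 - 0) /\<^sub>R (1/2)) ((1/2 - 0) /\<^sub>R (1/2)))"
    by (rule has_integral_affinity') (use h1 in auto)
  then have i1: "integral {0..1} (\<lambda>t. h ((1/2) * t)) = 2 * integral {0..1/2} h"
    by (simp add: integral_unique)
  have "((\<lambda>t. h ((1/2) *\<^sub>R t + 1/2)) has_integral (integral (cbox (1/2) 1) h /\<^sub>R (1/2) ^ DIM(real)))
          (cbox ((1/2 - 1/2) /\<^sub>R (1/2)) ((1 - 1/2) /\<^sub>R (1/2)))"
    by (rule has_integral_affinity') (use h2 in auto)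
  then have i2: "integral {0..1} (\<lambda>t. h ((1/2) * t + 1/2)) = 2 * integral {1/2..1} h"
    by (simp add: integral_unique)
  have "integral {0..1} h = integral {0..1/2} h + integral {1/2..1} h"
    using Henstock_Kurzweil_Integration.integral_combine[where a=0 and c="1/2" and b=1 and f=h] h by simp
  then show ?thesis using i1 i2 by simp
qed

lemma sin_plus_nat_2pi: "sin (x + real n * (2 * pi)) = sin x"
proof (induction n)
  case 0 then show ?case by simp
next
  case (Suc n)
  have "x + real (Suc n) * (2 * pi) = (x + real n * (2 * pi)) + 2 * pi" by (simp add: algebra_simps)
  then show ?case using Suc by (simp only: add.assoc[symmetric] sin_periodic)
qed

lemma rad_half1: "rademacher (Suc j) ((1/2) * t) = rademacher j t"
  unfolding rademacher_def by (simp add: mult_ac)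

lemma rad_half2: "rademacher (Suc j) ((1/2) * t + 1/2) = (if j = 0 then -1 else 1) * rademacher j t"
proof (cases j)
  case 0
  have "sin (2 * pi * ((1/2) * t + 1/2)) = - sin (pi * t)"
    by (simp add: algebra_simps sin_add)
  then show ?thesis using 0 unfolding rademacher_def by (simp add: sgn_minus)
next
  case (Suc i)
  have "2 ^ Suc j * pi * ((1/2) * t + 1/2) = 2 ^ j * pi * t + real (2 ^ i) * (2 * pi)"
    using Suc by (simp add: algebra_simps)
  then have "sin (2 ^ Suc j * pi * ((1/2) * t + 1/2)) = sin (2 ^ j * pi * t)"
    by (simp only: sin_plus_nat_2pi)
  then show ?thesis using Suc unfolding rademacher_def by simp
qed

lemma rad_meas1: "rademacher j \<in> borel_measurable (lebesgue_on {0..1})"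
proof -
  have "(\<lambda>t. sin (2 ^ j * pi * t)) \<in> borel_measurable (lebesgue_on {0..1::real})"
    by (intro continuous_imp_measurable_on_sets_lebesgue) (auto intro!: continuous_intros)
  then have "(\<lambda>t. sgn (sin (2 ^ j * pi * t))) \<in> borel_measurable (lebesgue_on {0..1::real})"
    using measurable_compose[OF _ borel_measurable_sgn] by blast
  then show ?thesis unfolding rademacher_def by (simp add: fun_eq_iff[symmetric])
qed

lemma rad_meas: "(\<lambda>t. rademacher j t * rademacher l t) \<in> borel_measurable (lebesgue_on {0..1})"
  using rad_meas1[of j] rad_meas1[of l] by measurable

lemma rad_bound: "\<bar>rademacher j t\<bar> \<le> 1"
  unfolding rademacher_def by (simp add: abs_sgn_eq)

lemma rad_int: "(\<lambda>t. rademacher j t * rademacher l t) integrable_on {0..1}"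
proof (rule measurable_bounded_by_integrable_imp_integrable[OF rad_meas])
  show "(\<lambda>_. 1::real) integrable_on {0..1::real}" by (rule integrable_const_ivl)
  show "norm (rademacher j t * rademacher l t) \<le> 1" for t
    using rad_bound[of j t] rad_bound[of l t] by (simp add: abs_mult mult_le_one)
qed auto

lemma rad_int1: "rademacher j integrable_on {0..1}"
proof (rule measurable_bounded_by_integrable_imp_integrable[OF rad_meas1])
  show "(\<lambda>_. 1::real) integrable_on {0..1::real}" by (rule integrable_const_ivl)
  show "norm (rademacher j t) \<le> 1" for t using rad_bound[of j t] by simp
qed auto


lemma r0_one: assumes "t \<in> {0..1} - {0, 1}" shows "rademacher 0 t = 1"
proof -
  have "0 < pi * t" "pi * t < pi" using assms pi_gt_zero by auto
  then have "sin (pi * t) > 0" by (rule sin_gt_zero)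
  then show ?thesis unfolding rademacher_def by simp
qed

lemma r0_spike:
  "integral {0..1} (\<lambda>t. rademacher 0 t * g t) = integral {0..1} g"
  by (rule integral_spike[of "{0, 1}"]) (auto simp: r0_one)

lemma rad_K: "integral {0..1} (rademacher (Suc l)) = 0"
proof (induction l)
  case 0
  have "integral {0..1} (rademacher (Suc 0)) =
     (integral {0..1} (\<lambda>t. rademacher (Suc 0) ((1/2) * t)) + integral {0..1} (\<lambda>t. rademacher (Suc 0) ((1/2) * t + 1/2))) / 2"
    by (rule halving[OF rad_int1])
  also have "\<dots> = (integral {0..1} (rademacher 0) + integral {0..1} (\<lambda>t. - rademacher 0 t)) / 2"
    by (simp only: rad_half1 rad_half2) simp
  also have "\<dots> = 0" by (simp add: integral_neg rad_int1)
  finally show ?case .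
next
  case (Suc l)
  have "integral {0..1} (rademacher (Suc (Suc l))) =
     (integral {0..1} (\<lambda>t. rademacher (Suc (Suc l)) ((1/2) * t)) + integral {0..1} (\<lambda>t. rademacher (Suc (Suc l)) ((1/2) * t + 1/2))) / 2"
    by (rule halving[OF rad_int1])
  also have "\<dots> = (integral {0..1} (rademacher (Suc l)) + integral {0..1} (rademacher (Suc l))) / 2"
    by (simp only: rad_half1 rad_half2) simp
  also have "\<dots> = 0" using Suc by simp
  finally show ?case .
qed

lemma rad_orth: "integral {0..1} (\<lambda>t. rademacher j t * rademacher l t) = (if j = l then 1 else 0)"
proof (induction j arbitrary: l)
  case 0
  show ?case
  proof (cases l)
    case 0
    have "integral {0..1} (\<lambda>t. rademacher 0 t * rademacher 0 t) = integral {0..1} (rademacher 0)"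
      by (rule r0_spike)
    also have "\<dots> = integral {0..1} (\<lambda>t. rademacher 0 t * 1)" by simp
    also have "\<dots> = integral {0..1} (\<lambda>t::real. 1::real)" by (rule r0_spike[of "\<lambda>_. 1"])
    also have "\<dots> = 1" by (simp add: content_real)
    finally show ?thesis using 0 by simp
  next
    case (Suc l')
    have "integral {0..1} (\<lambda>t. rademacher 0 t * rademacher l t) = integral {0..1} (rademacher l)"
      by (rule r0_spike)
    then show ?thesis using Suc rad_K by simp
  qed
next
  case (Suc j)
  show ?case
  proof (cases l)
    case 0
    have "integral {0..1} (\<lambda>t. rademacher (Suc j) t * rademacher l t) = integral {0..1} (\<lambda>t. rademacher 0 t * rademacher (Suc j) t)"
      using 0 by (simp add: mult.commute)
    also have "\<dots> = integral {0..1} (rademacher (Suc j))" by (rule r0_spike)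
    finally show ?thesis using 0 rad_K by simp
  next
    case (Suc l')
    define s where "s i = (if i = 0 then -1 else 1::real)" for i :: nat
    have "integral {0..1} (\<lambda>t. rademacher (Suc j) t * rademacher (Suc l') t)
      = (integral {0..1} (\<lambda>t. rademacher (Suc j) ((1/2) * t) * rademacher (Suc l') ((1/2) * t))
         + integral {0..1} (\<lambda>t. rademacher (Suc j) ((1/2) * t + 1/2) * rademacher (Suc l') ((1/2) * t + 1/2))) / 2"
      by (rule halving[OF rad_int])
    also have "\<dots> = (integral {0..1} (\<lambda>t. rademacher j t * rademacher l' t)
         + integral {0..1} (\<lambda>t. (s j * s l') * (rademacher j t * rademacher l' t))) / 2"
      by (simp only: rad_half1 rad_half2 s_def) (simp add: mult_ac)
    also have "\<dots> = (1 + s j * s l') / 2 * (if j = l' then 1 else 0)"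
      using Suc.IH[of l'] by (simp add: field_simps)
    also have "\<dots> = (if Suc j = l then 1 else 0)"
      using Suc by (auto simp: s_def)
    finally show ?thesis using Suc by simp
  qed
qed

lemma rad_sum:
  fixes y :: "nat \<Rightarrow> 'b::real_inner"
  assumes J: "finite J"
  shows "integral {0..1} (\<lambda>t. (norm (\<Sum>j\<in>J. rademacher j t *\<^sub>R y j))\<^sup>2) = (\<Sum>j\<in>J. (norm (y j))\<^sup>2)"
proof -
  have eq: "(norm (\<Sum>j\<in>J. rademacher j t *\<^sub>R y j))\<^sup>2
      = (\<Sum>j\<in>J. \<Sum>l\<in>J. (rademacher j t * rademacher l t) * inner (y l) (y j))" for t
    by (simp add: power2_norm_eq_inner inner_sum_left inner_sum_right sum_distrib_left mult_ac)
  have int: "(\<lambda>t. (rademacher j t * rademacher l t) * inner (y l) (y j)) integrable_on {0..1}" for j l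
    using rad_int[of j l] by (rule integrable_on_mult_left)
  have "integral {0..1} (\<lambda>t. (norm (\<Sum>j\<in>J. rademacher j t *\<^sub>R y j))\<^sup>2)
      = integral {0..1} (\<lambda>t. \<Sum>j\<in>J. \<Sum>l\<in>J. (rademacher j t * rademacher l t) * inner (y l) (y j))"
    by (simp only: eq)
  also have "\<dots> = (\<Sum>j\<in>J. integral {0..1} (\<lambda>t. \<Sum>l\<in>J. (rademacher j t * rademacher l t) * inner (y l) (y j)))"
    by (rule integral_sum[OF J]) (rule integrable_sum[OF J int])
  also have "\<dots> = (\<Sum>j\<in>J. \<Sum>l\<in>J. integral {0..1} (\<lambda>t. (rademacher j t * rademacher l t) * inner (y l) (y j)))"
    by (intro sum.cong refl integral_sum[OF J int])
  also have "\<dots> = (\<Sum>j\<in>J. \<Sum>l\<in>J. (if j = l then 1 else 0) * inner (y l) (y j))"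
    by (intro sum.cong refl) (simp add: rad_int rad_orth[symmetric])
  also have "\<dots> = (\<Sum>j\<in>J. \<Sum>l\<in>J. if l = j then inner (y l) (y j) else 0)"
    by (intro sum.cong refl) auto
  also have "\<dots> = (\<Sum>j\<in>J. (norm (y j))\<^sup>2)"
    using J by (simp add: sum.delta power2_norm_eq_inner)
  finally show ?thesis .
qed


lemma dual_ball_bound: "\<phi> \<in> dual_ball \<Longrightarrow> \<bar>\<phi> x\<bar> \<le> norm x"
proof -
  assume "\<phi> \<in> dual_ball"
  then have bl: "bounded_linear \<phi>" and o: "onorm \<phi> \<le> 1" unfolding dual_ball_def by auto
  have "norm (\<phi> x) \<le> onorm \<phi> * norm x" by (rule onorm[OF bl])
  also have "\<dots> \<le> 1 * norm x" by (rule mult_right_mono[OF o]) simp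
  finally show ?thesis by simp
qed

lemma zero_dual_ball: "(\<lambda>_. 0) \<in> dual_ball"
  unfolding dual_ball_def by (simp add: onorm_zero)

lemma weak_ge:
  assumes "\<phi> \<in> dual_ball"
  shows "sqrt (\<Sum>j\<in>{1..m}. \<bar>\<phi> (x j)\<bar>^2) \<le> weak2_norm m x"
  unfolding weak2_norm_def
proof (rule cSup_upper)
  show "sqrt (\<Sum>j\<in>{1..m}. \<bar>\<phi> (x j)\<bar>^2) \<in> (\<lambda>\<phi>. sqrt (\<Sum>j\<in>{1..m}. \<bar>\<phi> (x j)\<bar>^2)) ` dual_ball"
    using assms by blast
  show "bdd_above ((\<lambda>\<phi>. sqrt (\<Sum>j\<in>{1..m}. \<bar>\<phi> (x j)\<bar>^2)) ` dual_ball)"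
  proof (rule bdd_aboveI2)
    fix \<psi> :: "'a \<Rightarrow> real" assume p: "\<psi> \<in> dual_ball"
    show "sqrt (\<Sum>j\<in>{1..m}. \<bar>\<psi> (x j)\<bar>^2) \<le> sqrt (\<Sum>j\<in>{1..m}. (norm (x j))^2)"
      by (intro real_sqrt_le_mono sum_mono power_mono dual_ball_bound[OF p]) simp
  qed
qed

lemma weak_nonneg: "0 \<le> weak2_norm m x"
  using weak_ge[OF zero_dual_ball, of m x] by simp

lemma norm_le_weak:
  assumes j: "j \<in> {1..m}"
  shows "norm (x j) \<le> weak2_norm m x"
proof -
  define G0 where "G0 = range (\<lambda>t. (t *\<^sub>R x j, t * norm (x j)))"
  have "subspace G0" unfolding subspace_def G0_def
  proof (intro conjI ballI allI)
    show "0 \<in> range (\<lambda>t. (t *\<^sub>R x j, t * norm (x j)))" by (rule range_eqI[of _ _ 0]) (simp add: zero_prod_def)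
  next
    fix p q assume "p \<in> range (\<lambda>t. (t *\<^sub>R x j, t * norm (x j)))" "q \<in> range (\<lambda>t. (t *\<^sub>R x j, t * norm (x j)))"
    then obtain s t where "p = (s *\<^sub>R x j, s * norm (x j))" "q = (t *\<^sub>R x j, t * norm (x j))" by auto
    then show "p + q \<in> range (\<lambda>t. (t *\<^sub>R x j, t * norm (x j)))"
      by (intro range_eqI[of _ _ "s + t"]) (simp add: algebra_simps)
  next
    fix c p assume "p \<in> range (\<lambda>t. (t *\<^sub>R x j, t * norm (x j)))"
    then obtain s where "p = (s *\<^sub>R x j, s * norm (x j))" by auto
    then show "c *\<^sub>R p \<in> range (\<lambda>t. (t *\<^sub>R x j, t * norm (x j)))"
      by (intro range_eqI[of _ _ "c * s"]) simp
  qed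
  moreover have "a \<le> norm y" if "(y, a) \<in> G0" for y a
    using that unfolding G0_def by (auto intro!: mult_right_mono)
  ultimately obtain \<phi> where phi: "\<phi> \<in> dual_ball" and eq: "\<forall>y a. (y, a) \<in> G0 \<longrightarrow> \<phi> y = a"
    using hahn_banach_graph[of G0] by blast
  have "(x j, norm (x j)) \<in> G0" unfolding G0_def by (rule range_eqI[of _ _ 1]) simp
  then have "\<phi> (x j) = norm (x j)" using eq by blast
  then have "norm (x j) = sqrt (\<bar>\<phi> (x j)\<bar>^2)" by simp
  also have "\<dots> \<le> sqrt (\<Sum>i\<in>{1..m}. \<bar>\<phi> (x i)\<bar>^2)"
    by (rule real_sqrt_le_mono, rule member_le_sum) (use j in auto)
  also have "\<dots> \<le> weak2_norm m x" by (rule weak_ge[OF phi])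
  finally show ?thesis .
qed


lemma T_zero:
  fixes T :: "'a::real_vector \<Rightarrow> nat \<Rightarrow> real"
  assumes Tsc: "\<forall>c x. T (c *\<^sub>R x) = (\<lambda>i. c * T x i)"
  shows "T 0 = (\<lambda>_. 0)"
  using Tsc[rule_format, of 0 0] by simp

lemma T_sum:
  fixes T :: "'a::real_vector \<Rightarrow> nat \<Rightarrow> real"
  assumes Tadd: "\<forall>x y. T (x + y) = (\<lambda>i. T x i + T y i)"
    and Tsc: "\<forall>c x. T (c *\<^sub>R x) = (\<lambda>i. c * T x i)"
    and I: "finite I"
  shows "T (\<Sum>i\<in>I. c i *\<^sub>R v i) = (\<lambda>i'. \<Sum>i\<in>I. c i * T (v i) i')"
  using I
proof (induction I rule: finite_induct)
  case empty then show ?case using T_zero[OF Tsc] by simp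
next
  case (insert a I)
  then show ?case using Tadd Tsc by simp
qed

definition unitv :: "nat \<Rightarrow> nat \<Rightarrow> real" where
  "unitv i = (\<lambda>i'. if i' = i then 1 else 0)"

lemma coords:
  fixes T :: "'a::real_normed_vector \<Rightarrow> nat \<Rightarrow> real"
  assumes Tadd: "\<forall>x y. T (x + y) = (\<lambda>i. T x i + T y i)"
    and Tsc: "\<forall>c x. T (c *\<^sub>R x) = (\<lambda>i. c * T x i)"
    and bij: "bij_betw T N {y :: nat \<Rightarrow> real. \<forall>i\<ge>n. y i = 0}"
    and sN: "subspace N"
  defines "u \<equiv> (\<lambda>i. inv_into N T (unitv i))"
  shows "\<And>i. i < n \<Longrightarrow> u i \<in> N \<and> T (u i) = unitv i"
    and "\<And>s. (\<Sum>i<n. s i *\<^sub>R u i) \<in> N \<and> T (\<Sum>i<n. s i *\<^sub>R u i) = (\<lambda>i'. if i' < n then s i' else 0)"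
    and "\<And>x. x \<in> N \<Longrightarrow> x = (\<Sum>i<n. T x i *\<^sub>R u i)"
proof -
  have img: "T ` N = {y :: nat \<Rightarrow> real. \<forall>i\<ge>n. y i = 0}" and inj: "inj_on T N"
    using bij unfolding bij_betw_def by auto
  show ui: "u i \<in> N \<and> T (u i) = unitv i" if "i < n" for i
  proof -
    have "unitv i \<in> T ` N" unfolding img unitv_def using that by auto
    then show ?thesis unfolding u_def by (simp add: inv_into_into f_inv_into_f)
  qed
  show sm: "(\<Sum>i<n. s i *\<^sub>R u i) \<in> N \<and> T (\<Sum>i<n. s i *\<^sub>R u i) = (\<lambda>i'. if i' < n then s i' else 0)" for s
  proof
    show "(\<Sum>i<n. s i *\<^sub>R u i) \<in> N"
      by (intro subspace_sum[OF sN] subspace_scale[OF sN]) (use ui in auto)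
    have "T (\<Sum>i<n. s i *\<^sub>R u i) = (\<lambda>i'. \<Sum>i<n. s i * T (u i) i')"
      by (rule T_sum[OF Tadd Tsc]) simp
    also have "\<dots> = (\<lambda>i'. \<Sum>i<n. s i * unitv i i')"
      using ui by (intro ext sum.cong) auto
    also have "\<dots> = (\<lambda>i'. if i' < n then s i' else 0)"
      by (auto simp: unitv_def fun_eq_iff if_distrib[where f = "\<lambda>x. _ * x"] cong: if_cong)
    finally show "T (\<Sum>i<n. s i *\<^sub>R u i) = (\<lambda>i'. if i' < n then s i' else 0)" .
  qed
  show "x = (\<Sum>i<n. T x i *\<^sub>R u i)" if x: "x \<in> N" for x
  proof (rule inj_onD[OF inj])
    have "T x \<in> {y :: nat \<Rightarrow> real. \<forall>i\<ge>n. y i = 0}" using x img by blast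
    then show "T x = T (\<Sum>i<n. T x i *\<^sub>R u i)" using sm[of "T x"] by (auto simp: fun_eq_iff)
    show "x \<in> N" by fact
    show "(\<Sum>i<n. T x i *\<^sub>R u i) \<in> N" using sm by blast
  qed
qed

lemma linf_le:
  assumes "\<forall>i<n. \<bar>y i\<bar> \<le> b" "0 \<le> b"
  shows "linf_norm n y \<le> b"
  unfolding linf_norm_def using assms by (subst Max_le_iff) auto

lemma coord_le_linf: "i < n \<Longrightarrow> \<bar>y i\<bar> \<le> linf_norm n y"
  unfolding linf_norm_def by (rule Max_ge) auto


lemma coord_weak:
  fixes T :: "'a::real_normed_vector \<Rightarrow> nat \<Rightarrow> real"
  assumes Tadd: "\<forall>x y. T (x + y) = (\<lambda>i. T x i + T y i)"
    and Tsc: "\<forall>c x. T (c *\<^sub>R x) = (\<lambda>i. c * T x i)"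
    and sN: "subspace N"
    and nb: "\<forall>x\<in>N. linf_norm n (T x) \<le> norm x"
    and i: "i < n" and xN: "\<forall>j\<in>{1..m}. x j \<in> N"
  shows "(\<Sum>j\<in>{1..m}. (T (x j) i)\<^sup>2) \<le> (weak2_norm m x)\<^sup>2"
proof -
  define G0 where "G0 = (\<lambda>y. (y, T y i)) ` N"
  have "subspace G0" unfolding subspace_def G0_def
  proof (intro conjI ballI allI)
    show "0 \<in> (\<lambda>y. (y, T y i)) ` N"
      using subspace_0[OF sN] T_zero[OF Tsc] by (force simp: zero_prod_def)
  next
    fix p q assume "p \<in> (\<lambda>y. (y, T y i)) ` N" "q \<in> (\<lambda>y. (y, T y i)) ` N"
    then obtain y z where "y \<in> N" "z \<in> N" "p = (y, T y i)" "q = (z, T z i)" by auto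
    then show "p + q \<in> (\<lambda>y. (y, T y i)) ` N"
      using subspace_add[OF sN] Tadd by (intro image_eqI[of _ _ "y + z"]) auto
  next
    fix c p assume "p \<in> (\<lambda>y. (y, T y i)) ` N"
    then obtain y where "y \<in> N" "p = (y, T y i)" by auto
    then show "c *\<^sub>R p \<in> (\<lambda>y. (y, T y i)) ` N"
      using subspace_scale[OF sN] Tsc by (intro image_eqI[of _ _ "c *\<^sub>R y"]) auto
  qed
  moreover have "a \<le> norm y" if "(y, a) \<in> G0" for y a
  proof -
    from that have y: "y \<in> N" "a = T y i" unfolding G0_def by auto
    have "a \<le> \<bar>T y i\<bar>" using y by simp
    also have "\<dots> \<le> linf_norm n (T y)" by (rule coord_le_linf[OF i])
    also have "\<dots> \<le> norm y" using nb y by blast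
    finally show ?thesis .
  qed
  ultimately obtain \<phi> where phi: "\<phi> \<in> dual_ball" and eq: "\<forall>y a. (y, a) \<in> G0 \<longrightarrow> \<phi> y = a"
    using hahn_banach_graph[of G0] by blast
  have "(\<Sum>j\<in>{1..m}. (T (x j) i)\<^sup>2) = (\<Sum>j\<in>{1..m}. \<bar>\<phi> (x j)\<bar>^2)"
  proof (rule sum.cong[OF refl])
    fix j assume "j \<in> {1..m}"
    then have "(x j, T (x j) i) \<in> G0" using xN unfolding G0_def by blast
    then show "(T (x j) i)\<^sup>2 = \<bar>\<phi> (x j)\<bar>^2" using eq by simp
  qed
  also have "\<dots> = (sqrt (\<Sum>j\<in>{1..m}. \<bar>\<phi> (x j)\<bar>^2))\<^sup>2"
    by (rule real_sqrt_pow2[symmetric], rule sum_nonneg) simp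
  also have "\<dots> \<le> (weak2_norm m x)\<^sup>2" by (rule power_mono[OF weak_ge[OF phi]], rule real_sqrt_ge_zero, rule sum_nonneg, simp)
  finally show ?thesis .
qed

lemma pow_le_exp_fact: "real k ^ k \<le> exp (real k) * fact k"
proof -
  have s: "summable (\<lambda>n. real k ^ n /\<^sub>R fact n)" by (rule summable_exp_generic)
  have "real k ^ k / fact k = (\<Sum>n\<in>{k}. real k ^ n /\<^sub>R fact n)" by (simp add: divide_inverse mult.commute)
  also have "\<dots> \<le> (\<Sum>n. real k ^ n /\<^sub>R fact n)"
    by (rule sum_le_suminf[OF s]) auto
  also have "\<dots> = exp (real k)" by (simp add: exp_def)
  finally show ?thesis by (simp add: divide_le_eq mult.commute)
qed


lemma polar_bound2:
  fixes P :: "'a::real_normed_vector \<Rightarrow> 'b::real_normed_vector"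
  assumes PB: "\<And>y. norm (P y) \<le> C0 * c0 ^ k * norm y ^ k"
    and C0: "C0 \<ge> 0" and c0: "c0 \<ge> 0" and lam: "lam \<ge> 0"
    and v: "\<forall>l<k. norm (v l) \<le> lam"
  shows "norm (polar k P v) \<le> C0 * (exp 1 * c0 * lam) ^ k"
proof -
  have each: "norm (P (\<Sum>l<k. \<epsilon> l *\<^sub>R v l)) \<le> C0 * c0 ^ k * (real k * lam) ^ k" if e: "\<epsilon> \<in> signs {..<k}" for \<epsilon>
  proof -
    have "norm (\<Sum>l<k. \<epsilon> l *\<^sub>R v l) \<le> (\<Sum>l<k. norm (\<epsilon> l *\<^sub>R v l))" by (rule norm_sum)
    also have "\<dots> \<le> (\<Sum>l<k. lam)"
      by (rule sum_mono) (use signs_abs[OF e] v in auto)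
    also have "\<dots> = real k * lam" by simp
    finally have n: "norm (\<Sum>l<k. \<epsilon> l *\<^sub>R v l) \<le> real k * lam" .
    have "norm (P (\<Sum>l<k. \<epsilon> l *\<^sub>R v l)) \<le> C0 * c0 ^ k * norm (\<Sum>l<k. \<epsilon> l *\<^sub>R v l) ^ k" by (rule PB)
    also have "\<dots> \<le> C0 * c0 ^ k * (real k * lam) ^ k"
      by (rule mult_left_mono[OF power_mono[OF n]]) (use C0 c0 in auto)
    finally show ?thesis .
  qed
  have "norm (polar k P v) \<le> (1 / (2 ^ k * fact k)) * (\<Sum>\<epsilon>\<in>signs {..<k}. norm (P (\<Sum>l<k. \<epsilon> l *\<^sub>R v l)))"
    by (rule polar_bound)
  also have "\<dots> \<le> (1 / (2 ^ k * fact k)) * (\<Sum>\<epsilon>\<in>signs {..<k}. C0 * c0 ^ k * (real k * lam) ^ k)"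
    by (rule mult_left_mono[OF sum_mono[OF each]]) auto
  also have "\<dots> = C0 * c0 ^ k * lam ^ k * (real k ^ k / fact k)"
    by (simp add: card_signs power_mult_distrib field_simps)
  also have "\<dots> \<le> C0 * c0 ^ k * lam ^ k * exp (real k)"
  proof (rule mult_left_mono)
    show "real k ^ k / fact k \<le> exp (real k)"
      using pow_le_exp_fact[of k] by (simp add: divide_le_eq mult.commute)
  qed (use C0 c0 lam in auto)
  also have "\<dots> = C0 * (exp 1 * c0 * lam) ^ k"
    by (simp add: power_mult_distrib exp_of_nat_mult[symmetric] mult_ac)
  finally show ?thesis .
qed

lemma avgv_le:
  fixes g :: "nat \<Rightarrow> 'b::real_inner"
  assumes J: "finite J"
  shows "avgv J g \<le> sqrt (\<Sum>j\<in>J. (norm (g j))\<^sup>2)"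
proof -
  have "avgv J g = avg J (\<lambda>\<epsilon>. norm (\<Sum>j\<in>J. \<epsilon> j *\<^sub>R g j) * 1)" unfolding avgv_def by simp
  also have "\<dots> \<le> sqrt (avg J (\<lambda>\<epsilon>. (norm (\<Sum>j\<in>J. \<epsilon> j *\<^sub>R g j))\<^sup>2)) * sqrt (avg J (\<lambda>\<epsilon>. 1\<^sup>2))"
    by (rule avg_cs[OF J])
  also have "avg J (\<lambda>\<epsilon>. (1::real)\<^sup>2) = 1" using avg_const[OF J, of 1] by simp
  also have "avg J (\<lambda>\<epsilon>. (norm (\<Sum>j\<in>J. \<epsilon> j *\<^sub>R g j))\<^sup>2)
      = avg J (\<lambda>\<epsilon>. \<Sum>j\<in>J. \<Sum>l\<in>J. inner (g l) (g j) * (\<epsilon> j * \<epsilon> l))"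
    by (rule avg_cong) (simp add: power2_norm_eq_inner inner_sum_left inner_sum_right sum_distrib_left mult_ac)
  also have "\<dots> = (\<Sum>j\<in>J. \<Sum>l\<in>J. inner (g l) (g j) * avg J (\<lambda>\<epsilon>. \<epsilon> j * \<epsilon> l))"
    by (simp add: avg_sum avg_cmult)
  also have "\<dots> = (\<Sum>j\<in>J. \<Sum>l\<in>J. if l = j then inner (g l) (g j) else 0)"
    by (intro sum.cong refl) (auto simp: avg_prod2 J)
  also have "\<dots> = (\<Sum>j\<in>J. (norm (g j))\<^sup>2)"
    using J by (simp add: sum.delta power2_norm_eq_inner)
  finally show ?thesis by simp
qed


lemma per_degree:
  fixes P :: "'a::real_normed_vector \<Rightarrow> 'b::real_inner" and T :: "'a \<Rightarrow> nat \<Rightarrow> real"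
    and J :: "nat set" and g :: "nat \<Rightarrow> 'b" and x :: "nat \<Rightarrow> 'a"
  assumes hp: "cont_hom_poly k P" and k: "k \<ge> 1"
    and PB: "\<And>y. norm (P y) \<le> C0 * c0 ^ k * norm y ^ k"
    and C0: "C0 \<ge> 0" and c0: "c0 \<ge> 0" and lam: "lam \<ge> 0"
    and J: "finite J" and W: "W \<ge> 0"
    and Vb: "\<forall>v\<in>Vset n u. norm v \<le> lam"
    and coef: "\<forall>j\<in>J. x j = (\<Sum>i<n. T (x j) i *\<^sub>R u i)"
    and wt: "\<forall>i<n. (\<Sum>j\<in>J. (T (x j) i)\<^sup>2) \<le> W\<^sup>2"
  shows "(\<Sum>j\<in>J. inner (P (x j)) (g j)) \<le> C0 * (sqrt 3 * exp 1 * c0 * lam * W) ^ k * sqrt (\<Sum>j\<in>J. (norm (g j))\<^sup>2)"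
proof -
  obtain A where cm: "cont_multilinear k A" and PA: "\<forall>x. P x = A (\<lambda>_. x)"
    using hp unfolding cont_hom_poly_def by blast
  have dep: "\<forall>v v'. (\<forall>l<k. v l = v' l) \<longrightarrow> A v = A v'" and lin: "\<forall>l<k. \<forall>v. linear (\<lambda>z. A (v(l := z)))"
    using cm unfolding cont_multilinear_def by auto
  have PA': "P y = A (\<lambda>_. y)" for y using PA by simp
  define Q where "Q = polar k P"
  have diag: "Q (\<lambda>_. y) = P y" for y unfolding Q_def by (rule polar_diag[OF dep lin]) (rule PA')
  have depQ: "\<forall>v v'. (\<forall>l<k. v l = v' l) \<longrightarrow> Q v = Q v'" unfolding Q_def by (rule polar_dep)
  have linQ: "\<forall>l<k. \<forall>v. linear (\<lambda>z. Q (v(l := z)))" unfolding Q_def by (rule polar_lin[OF dep lin]) (rule PA')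
  have bndQ: "\<forall>v. (\<forall>l<k. v l \<in> Vset n u) \<longrightarrow> norm (Q v) \<le> C0 * (exp 1 * c0 * lam) ^ k"
    unfolding Q_def using Vb by (intro allI impI polar_bound2[OF PB C0 c0 lam]) auto
  have "(\<Sum>j\<in>J. inner (Q (\<lambda>l. x j)) (g j)) \<le> sqrt 3 ^ k * (C0 * (exp 1 * c0 * lam) ^ k) * W ^ k * Fk k J g"
    by (rule gt_multi[OF J W depQ linQ bndQ, where t = "\<lambda>l j i. T (x j) i"]) (use coef wt in auto)
  also have "\<dots> \<le> sqrt 3 ^ k * (C0 * (exp 1 * c0 * lam) ^ k) * W ^ k * sqrt (\<Sum>j\<in>J. (norm (g j))\<^sup>2)"
  proof (rule mult_left_mono)
    show "Fk k J g \<le> sqrt (\<Sum>j\<in>J. (norm (g j))\<^sup>2)" using k avgv_le[OF J] by (simp add: Fk_def)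
  qed (use C0 c0 lam W in auto)
  also have "\<dots> = C0 * (sqrt 3 * exp 1 * c0 * lam * W) ^ k * sqrt (\<Sum>j\<in>J. (norm (g j))\<^sup>2)"
    by (simp add: power_mult_distrib mult_ac)
  finally show ?thesis by (simp add: diag)
qed


lemma analytic_almost:
  fixes f :: "'a::banach \<Rightarrow> 'b::{real_inner, complete_space}"
  assumes Linf: "L_infty_space TYPE('a)" and an: "analytic_at_pt f a"
  shows "almost_2_summing_at f a"
proof -
  obtain lam where lam: "lam \<ge> 1"
    and Lp: "\<forall>M :: 'a set. fin_dim_subspace M \<longrightarrow> (\<exists>N. fin_dim_subspace N \<and> M \<subseteq> N \<and> close_to_linf lam N)"
    using Linf unfolding L_infty_space_def by blast
  obtain P C c \<delta> where \<delta>: "\<delta> > 0" and hp: "\<forall>k\<ge>1. cont_hom_poly k (P k)"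
    and pb: "\<forall>k\<ge>1. \<forall>x. norm (P k x) \<le> C * c ^ k * norm x ^ k"
    and sm: "\<forall>x. norm x < \<delta> \<longrightarrow> (\<lambda>k. P (Suc k) x) sums (f (a + x) - f a)"
    using an unfolding analytic_at_pt_def by blast
  define C0 where "C0 = \<bar>C\<bar>"
  define c0 where "c0 = \<bar>c\<bar> + 1"
  have C0: "C0 \<ge> 0" and c0: "c0 \<ge> 0" "c0 > 0" unfolding C0_def c0_def by auto
  have pb0: "norm (P k y) \<le> C0 * c0 ^ k * norm y ^ k" if "k \<ge> 1" for k y
  proof -
    have "norm (P k y) \<le> C * c ^ k * norm y ^ k" using pb that by blast
    also have "\<dots> \<le> \<bar>C * c ^ k * norm y ^ k\<bar>" by simp
    also have "\<dots> = C0 * \<bar>c\<bar> ^ k * norm y ^ k" unfolding C0_def by (simp add: abs_mult power_abs)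
    also have "\<dots> \<le> C0 * c0 ^ k * norm y ^ k"
    proof -
      have "\<bar>c\<bar> ^ k \<le> c0 ^ k" unfolding c0_def by (rule power_mono) auto
      then show ?thesis by (rule mult_right_mono[OF mult_left_mono[OF _ C0]]) simp
    qed
    finally show ?thesis .
  qed
  define B where "B = sqrt 3 * exp 1 * c0 * lam"
  have B: "B > 0" unfolding B_def using c0 lam by simp
  define \<epsilon> where "\<epsilon> = min \<delta> (1 / (2 * B))"
  have \<epsilon>: "\<epsilon> > 0" unfolding \<epsilon>_def using \<delta> B by simp
  define K where "K = 2 * C0 * B + 1"
  have K: "K > 0" unfolding K_def using C0 B by (simp add: add_nonneg_pos)
  show ?thesis unfolding almost_2_summing_at_def
  proof (rule exI[of _ K], rule exI[of _ \<epsilon>], rule exI[of _ "1::real"], intro conjI allI impI K \<epsilon> zero_less_one)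
    fix m and x :: "nat \<Rightarrow> 'a"
    assume Wlt: "weak2_norm m x < \<epsilon>"
    define W where "W = weak2_norm m x"
    define J where "J = {1..m}"
    have Jf: "finite J" unfolding J_def by simp
    have W0: "W \<ge> 0" unfolding W_def by (rule weak_nonneg)
    have xW: "norm (x j) \<le> W" if "j \<in> J" for j unfolding W_def using that J_def norm_le_weak by blast
    define g where "g j = f (a + x j) - f a" for j
    have gs: "(\<lambda>k. P (Suc k) (x j)) sums g j" if "j \<in> J" for j
    proof -
      have "norm (x j) < \<delta>" using xW[OF that] Wlt \<epsilon>_def W_def by simp
      then show ?thesis using sm g_def by simp
    qed
    have "fin_dim_subspace (span (x ` J))"
      unfolding fin_dim_subspace_def by (intro conjI subspace_span exI[of _ "x ` J"]) (simp_all add: Jf)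
    then obtain N where Nfd: "fin_dim_subspace N" and MN: "span (x ` J) \<subseteq> N" and cl: "close_to_linf lam N"
      using Lp by blast
    have sN: "subspace N" using Nfd unfolding fin_dim_subspace_def by simp
    obtain n T where Tadd: "\<forall>x y. T (x + y) = (\<lambda>i. T x i + T y i)"
      and Tsc: "\<forall>c x. T (c *\<^sub>R x) = (\<lambda>i. c * T x i)"
      and bij: "bij_betw T N {y :: nat \<Rightarrow> real. \<forall>i\<ge>n. y i = 0}"
      and nb: "\<forall>x\<in>N. linf_norm n (T x) \<le> norm x \<and> norm x \<le> lam * linf_norm n (T x)"
      using cl unfolding close_to_linf_def by blast
    define u where "u = (\<lambda>i. inv_into N T (unitv i))"
    note cds = coords[OF Tadd Tsc bij sN, folded u_def]
    have xN: "x j \<in> N" if "j \<in> J" for j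
    proof -
      have "x j \<in> span (x ` J)" by (rule span_base) (rule imageI[OF that])
      then show ?thesis using MN by (rule subsetD[rotated])
    qed
    have coef: "\<forall>j\<in>J. x j = (\<Sum>i<n. T (x j) i *\<^sub>R u i)"
    proof
      fix j assume "j \<in> J"
      show "x j = (\<Sum>i<n. T (x j) i *\<^sub>R u i)" using cds(3)[OF xN[OF \<open>j \<in> J\<close>]] by (simp add: u_def)
    qed
    have Vb: "\<forall>v\<in>Vset n u. norm v \<le> lam"
    proof
      fix v assume "v \<in> Vset n u"
      then obtain s where s: "\<forall>i. \<bar>s i\<bar> \<le> 1" and v: "v = (\<Sum>i<n. s i *\<^sub>R u i)" unfolding Vset_def by blast
      have vN: "v \<in> N" using cds(2)[of s] unfolding v u_def by (rule conjunct1)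
      have Tv: "T v = (\<lambda>i'. if i' < n then s i' else 0)" using cds(2)[of s] unfolding v u_def by (rule conjunct2)
      have "norm v \<le> lam * linf_norm n (T v)" using nb[rule_format, OF vN] by (rule conjunct2)
      also have "\<dots> \<le> lam * 1"
      proof (rule mult_left_mono[OF linf_le])
        show "\<forall>i<n. \<bar>T v i\<bar> \<le> 1" using s unfolding Tv by simp
      qed (use lam in simp_all)
      finally show "norm v \<le> lam" by simp
    qed
    have wt: "\<forall>i<n. (\<Sum>j\<in>J. (T (x j) i)\<^sup>2) \<le> W\<^sup>2"
      unfolding J_def W_def using nb xN J_def by (intro allI impI coord_weak[OF Tadd Tsc sN]) auto
    define Sg where "Sg = sqrt (\<Sum>j\<in>J. (norm (g j))\<^sup>2)"
    have Sg0: "Sg \<ge> 0" unfolding Sg_def by (simp add: sum_nonneg)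
    define q where "q = B * W"
    have q0: "q \<ge> 0" unfolding q_def using B W0 by simp
    have q2: "q \<le> 1/2"
    proof -
      have "W < 1 / (2 * B)" using Wlt \<epsilon>_def W_def by simp
      then have "B * W < B * (1 / (2 * B))" using B by (rule mult_strict_left_mono)
      also have "B * (1 / (2 * B)) = 1 / 2" using B by simp
      finally show ?thesis unfolding q_def by simp
    qed
    have deg: "(\<Sum>j\<in>J. inner (P (Suc k) (x j)) (g j)) \<le> C0 * Sg * q ^ Suc k" for k
    proof -
      have hpk: "cont_hom_poly (Suc k) (P (Suc k))" using hp by simp
      have pbk: "norm (P (Suc k) y) \<le> C0 * c0 ^ Suc k * norm y ^ Suc k" for y by (rule pb0) simp
      have lam0: "lam \<ge> 0" using lam by simp
      have "(\<Sum>j\<in>J. inner (P (Suc k) (x j)) (g j)) \<le> C0 * (sqrt 3 * exp 1 * c0 * lam * W) ^ Suc k * Sg"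
        unfolding Sg_def
        by (rule per_degree[OF hpk _ pbk C0 c0(1) lam0 Jf W0 Vb coef wt]) simp
      then show ?thesis unfolding q_def B_def by (simp add: mult_ac)
    qed
    have S1: "(\<lambda>k. \<Sum>j\<in>J. inner (P (Suc k) (x j)) (g j)) sums (\<Sum>j\<in>J. inner (g j) (g j))"
    proof (rule sums_sum)
      fix j assume "j \<in> J"
      show "(\<lambda>k. inner (P (Suc k) (x j)) (g j)) sums inner (g j) (g j)"
        by (rule bounded_linear.sums[OF bounded_linear_inner_left gs[OF \<open>j \<in> J\<close>]])
    qed
    have S2: "(\<lambda>k. C0 * Sg * q ^ Suc k) sums (C0 * Sg * q * (1 / (1 - q)))"
    proof -
      have "(\<lambda>k. q ^ k) sums (1 / (1 - q))" by (rule geometric_sums) (use q0 q2 in auto)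
      from sums_mult[OF this, of "C0 * Sg * q"] show ?thesis by (simp add: mult_ac)
    qed
    have "(\<Sum>j\<in>J. inner (g j) (g j)) \<le> C0 * Sg * q * (1 / (1 - q))"
      by (rule sums_le[OF _ S1 S2]) (use deg in auto)
    moreover have "(\<Sum>j\<in>J. inner (g j) (g j)) = Sg\<^sup>2"
      unfolding Sg_def by (simp add: sum_nonneg power2_norm_eq_inner)
    moreover have "C0 * Sg * q * (1 / (1 - q)) \<le> C0 * Sg * q * 2"
      by (rule mult_left_mono) (use q0 q2 C0 Sg0 in \<open>auto simp: field_simps\<close>)
    ultimately have "Sg * Sg \<le> (2 * C0 * q) * Sg" by (simp add: power2_eq_square mult_ac)
    then have Sgle: "Sg \<le> 2 * C0 * q"
      using Sg0 by (cases "Sg = 0") (use C0 q0 in auto)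
    have "integral {0..1} (\<lambda>t. (norm (\<Sum>j\<in>{1..m}. rademacher j t *\<^sub>R (f (a + x j) - f a)))\<^sup>2) = (\<Sum>j\<in>J. (norm (g j))\<^sup>2)"
      unfolding J_def g_def by (rule rad_sum) simp
    then have "sqrt (integral {0..1} (\<lambda>t. (norm (\<Sum>j\<in>{1..m}. rademacher j t *\<^sub>R (f (a + x j) - f a)))\<^sup>2)) = Sg"
      unfolding Sg_def by simp
    also have "\<dots> \<le> 2 * C0 * B * W" using Sgle unfolding q_def by (simp add: mult_ac)
    also have "\<dots> \<le> K * W" unfolding K_def using W0 by (simp add: distrib_right)
    also have "\<dots> = K * weak2_norm m x powr 1" using W0 unfolding W_def by simp
    finally show "sqrt (integral {0..1} (\<lambda>t. (norm (\<Sum>j\<in>{1..m}. rademacher j t *\<^sub>R (f (a + x j) - f a)))\<^sup>2))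
        \<le> K * weak2_norm m x powr 1" .
  qed
qed


theorem mainTheorem7:
  fixes f :: "'a::banach \<Rightarrow> 'b::{real_inner, complete_space}"
  assumes "L_infty_space TYPE('a)"
  shows "(\<forall>a. analytic_at_pt f a \<longrightarrow> almost_2_summing_at f a)
         \<and> (entire_map f \<longrightarrow> (\<forall>a. almost_2_summing_at f a))"
proof (intro conjI allI impI)
  fix a assume "analytic_at_pt f a"
  then show "almost_2_summing_at f a" by (rule analytic_almost[OF assms])
next
  fix a assume e: "entire_map f"
  then obtain P C c where "\<forall>k\<ge>1. cont_hom_poly k (P k)"
    "\<forall>k\<ge>1. \<forall>x. norm (P k x) \<le> C * c ^ k * norm x ^ k"
    "\<forall>x. (\<lambda>k. P (Suc k) x) sums (f (a + x) - f a)"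
    unfolding entire_map_def by blast
  then have "analytic_at_pt f a" unfolding analytic_at_pt_def
    by (intro exI[of _ P] exI[of _ C] exI[of _ c] exI[of _ "1::real"]) auto
  then show "almost_2_summing_at f a" by (rule analytic_almost[OF assms])
qed

end
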